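(* Let $A\in\mathscr R$ be fixed and let $\mathbf Z^{(1)},\dots,\mathbf Z^{(n+m)}$ be independent $[0,\infty)^d$-valued random vectors with distributions $V_1,\dots,V_{n+m}$. Suppose $V_1,\dots,V_n\in\mathcal A_A$, $V_i(xA)\asymp V_1(xA)$ for $i=2,\dots,n$, and $V_j(xA)=o[V_1(xA)]$ for $j=n+1,\dots,n+m$. Let $b\in(0,\infty)$, $\mathbf c_n=(c_1,\dots,c_n)^\top\in(0,b]^n$ and $(c_{n+1},\dots,c_{n+m})\in[0,b]^m$ such that for each $j\in\{n+1,\dots,n+m\}$ there exists $i_j\in\{1,\dots,n\}$ with $c_j\le c_{i_j}$. Then $$\lim_{x\to\infty}\sup_{\mathbf c_n\in(0,b]^n}\left|\frac{\mathbf P\big(\sum_{i=1}^{n+m}c_i\mathbf Z^{(i)}\in xA\big)}{\sum_{i=1}^n\mathbf P(c_i\mathbf Z^{(i)}\in xA)}-1\right|=0.$$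
   Context: $\mathscr R$: open, increasing ($\mathbf z\in A,\mathbf y\in[0,\infty)^d\Rightarrow\mathbf z+\mathbf y\in A$) sets $A\subsetneq\mathbb R^d$ with convex complement and $\mathbf 0\notin\overline A$. For $V$ on $[0,\infty)^d$, $\mathbf Z\sim V$: $V(xA)=\mathbf P(\mathbf Z\in xA)$, $V_A$ the distribution of $\sup\{u:\mathbf Z\in uA\}$. One-dimensional $B$ (infinite right endpoint) is in $\mathcal P_{\mathcal D}$ if $\limsup_x\overline B(vx)/\overline B(x)<1$ for some (equivalently all) $v>1$; $\mathcal A=\mathcal S\cap\mathcal P_{\mathcal D}$ with $\mathcal S$ the subexponential class. $V\in\mathcal A_A$ iff $V_A\in\mathcal A$. $f\asymp g$: $f=O(g)$ and $g=O(f)$. *)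

theory Defs
  imports "HOL-Probability.Probability" "HOL-Library.Landau_Symbols"
begin

definition classR :: "(real ^ 'd) set \<Rightarrow> bool" where
  "classR A \<longleftrightarrow> open A
     \<and> (\<forall>z\<in>A. \<forall>y. (\<forall>k. 0 \<le> y $ k) \<longrightarrow> z + y \<in> A)
     \<and> A \<noteq> UNIV
     \<and> convex (UNIV - A)
     \<and> 0 \<notin> closure A"

definition dil :: "real \<Rightarrow> (real ^ 'd) set \<Rightarrow> (real ^ 'd) set" where
  "dil x A = (\<lambda>z. x *\<^sub>R z) ` A"

definition supA :: "(real ^ 'd) set \<Rightarrow> real ^ 'd \<Rightarrow> real" where
  "supA A z = (if {u. 0 < u \<and> z \<in> dil u A} = {} then 0
               else Sup {u. 0 < u \<and> z \<in> dil u A})"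

definition distA :: "(real ^ 'd) set \<Rightarrow> (real ^ 'd) measure \<Rightarrow> real measure" where
  "distA A V = distr V borel (supA A)"

definition tail :: "real measure \<Rightarrow> real \<Rightarrow> real" where
  "tail B x = measure B {x<..}"

definition subexp :: "real measure \<Rightarrow> bool" where
  "subexp B \<longleftrightarrow> prob_space B \<and> sets B = sets borel \<and> emeasure B {..<0} = 0
     \<and> (\<forall>x. 0 < tail B x)
     \<and> ((\<lambda>x. tail (B \<star> B) x / tail B x) \<longlongrightarrow> 2) at_top"

definition PD :: "real measure \<Rightarrow> bool" where
  "PD B \<longleftrightarrow> (\<forall>x. 0 < tail B x)
     \<and> (\<exists>v>1. Limsup at_top (\<lambda>x. ereal (tail B (v * x) / tail B x)) < 1)"

definition classA :: "real measure \<Rightarrow> bool" where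
  "classA B \<longleftrightarrow> subexp B \<and> PD B"

definition classAA :: "(real ^ 'd) set \<Rightarrow> (real ^ 'd) measure \<Rightarrow> bool" where
  "classAA A V \<longleftrightarrow> classA (distA A V)"

end

theory Submission
  imports Defs
begin

lemma measure_pair_Times:
  assumes "prob_space P" "prob_space Q" "S \<in> sets P" "T \<in> sets Q"
  shows "measure (P \<Otimes>\<^sub>M Q) (S \<times> T) = measure P S * measure Q T"
proof -
  interpret Q: prob_space Q by fact
  interpret P: prob_space P by fact
  have "emeasure (P \<Otimes>\<^sub>M Q) (S \<times> T) = emeasure P S * emeasure Q T"
    using assms by (intro Q.emeasure_pair_measure_Times) auto
  then show ?thesis
    by (simp add: measure_def enn2real_mult)
qed


lemma pred_set2: "Measurable.pred (borel \<Otimes>\<^sub>M borel) P \<Longrightarrow> {p. P p} \<in> sets (borel \<Otimes>\<^sub>M borel)"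
  unfolding pred_def by (simp add: space_pair_measure)

locale tailB =
  fixes B :: "real measure"
  assumes sub: "subexp B" and pd: "PD B"
begin

lemma prob: "prob_space B" and sets_B[simp, measurable_cong]: "sets B = sets borel"
  and neg0: "emeasure B {..<0} = 0" and pos: "\<And>x. 0 < tail B x"
  and ratio: "((\<lambda>x. tail (B \<star> B) x / tail B x) \<longlongrightarrow> 2) at_top"
  using sub unfolding subexp_def by auto

interpretation B: prob_space B by (rule prob)

lemma space_B[simp]: "space B = UNIV"
  using sets_eq_imp_space_eq[OF sets_B] by simp

lemma tail_mono: "x \<le> y \<Longrightarrow> tail B y \<le> tail B x"
  unfolding tail_def by (intro B.finite_measure_mono) auto

lemma tail_le1: "tail B x \<le> 1"
  unfolding tail_def by simp

lemma tail_nonneg: "0 \<le> tail B x"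
  unfolding tail_def by simp

lemma neg0': "measure B {..<0} = 0"
  using neg0 by (simp add: measure_def)

lemma nonneg_ae: "measure B {0..} = 1"
proof -
  have "measure B {0..} = 1 - measure B {..<0}"
    by (subst B.prob_compl[symmetric]) (auto intro!: arg_cong[where f="measure B"])
  then show ?thesis using neg0' by simp
qed

lemma measure_Icc0: "0 \<le> h \<Longrightarrow> measure B {0..h} = 1 - tail B h"
proof -
  assume h: "0 \<le> h"
  have "measure B {0..} = measure B {0..h} + measure B {h<..}"
    using h by (subst B.finite_measure_Union[symmetric]) (auto intro!: arg_cong[where f="measure B"])
  then show ?thesis using nonneg_ae unfolding tail_def by simp
qed

lemma measure_Ioc: "h \<le> y \<Longrightarrow> measure B {h<..y} = tail B h - tail B y"
proof -
  assume h: "h \<le> y"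
  have "measure B {h<..} = measure B {h<..y} + measure B {y<..}"
    using h by (subst B.finite_measure_Union[symmetric]) (auto intro!: arg_cong[where f="measure B"])
  then show ?thesis unfolding tail_def by simp
qed

lemma tailBB: "tail (B \<star> B) y = measure (B \<Otimes>\<^sub>M B) {p. y < fst p + snd p}"
proof -
  have "tail (B \<star> B) y = measure (B \<Otimes>\<^sub>M B) ((\<lambda>(x, y). x + y) -` {y<..} \<inter> space (B \<Otimes>\<^sub>M B))"
    unfolding tail_def convolution_def by (subst measure_distr) auto
  also have "\<dots> = measure (B \<Otimes>\<^sub>M B) {p. y < fst p + snd p}"
    by (auto simp: space_pair_measure intro!: arg_cong[where f="measure (B \<Otimes>\<^sub>M B)"])
  finally show ?thesis .
qed


interpretation BB: pair_prob_space B B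
  unfolding pair_prob_space_def pair_sigma_finite_def using prob prob_space_imp_sigma_finite by auto

definition J :: "real \<Rightarrow> real \<Rightarrow> real" where
  "J h y = measure (B \<Otimes>\<^sub>M B) {p. h < fst p \<and> h < snd p \<and> y < fst p + snd p}"

lemma sets_BB[measurable_cong]: "sets (B \<Otimes>\<^sub>M B) = sets (borel \<Otimes>\<^sub>M borel)"
  by (intro sets_pair_measure_cong) auto

lemma pred_set: "Measurable.pred (borel \<Otimes>\<^sub>M borel) P \<Longrightarrow> {p. P p} \<in> sets (B \<Otimes>\<^sub>M B)"
  unfolding pred_def sets_BB by (simp add: space_pair_measure)


lemma J_set2[simp]: "{p::real\<times>real. h < fst p \<and> h < snd p \<and> y < fst p + snd p} \<in> sets (borel \<Otimes>\<^sub>M borel)"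
  by (rule pred_set2) measurable

lemma sum_set2[simp]: "{p::real\<times>real. y < fst p + snd p} \<in> sets (borel \<Otimes>\<^sub>M borel)"
  by (rule pred_set2) measurable

lemma J_set[measurable]: "{p. h < fst p \<and> h < snd p \<and> y < fst p + snd p} \<in> sets (B \<Otimes>\<^sub>M B)"
  by (rule pred_set) measurable

lemma sum_set[measurable]: "{p. y < fst p + snd p} \<in> sets (B \<Otimes>\<^sub>M B)"
  by (rule pred_set) measurable

lemma J_nonneg: "0 \<le> J h y" unfolding J_def by simp

lemma lowerJ:
  assumes h: "0 \<le> h" and y: "2 * h < y"
  shows "2 * tail B y * (1 - tail B h) + J h y \<le> tail (B \<star> B) y"
proof -
  define E1 where "E1 = {y<..} \<times> {0..h}"
  define E2 where "E2 = {0..h} \<times> {y<..}"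
  define E3 where "E3 = {p. h < fst p \<and> h < snd p \<and> y < fst p + snd p}"
  have [measurable]: "E1 \<in> sets (B \<Otimes>\<^sub>M B)" "E2 \<in> sets (B \<Otimes>\<^sub>M B)" "E3 \<in> sets (B \<Otimes>\<^sub>M B)"
    unfolding E1_def E2_def E3_def by measurable
  have m1: "measure (B \<Otimes>\<^sub>M B) E1 = tail B y * (1 - tail B h)"
    unfolding E1_def by (subst measure_pair_Times) (auto simp: prob measure_Icc0 h tail_def)
  have m2: "measure (B \<Otimes>\<^sub>M B) E2 = tail B y * (1 - tail B h)"
    unfolding E2_def by (subst measure_pair_Times) (auto simp: prob measure_Icc0 h tail_def)
  have "measure (B \<Otimes>\<^sub>M B) (E1 \<union> E2 \<union> E3) = measure (B \<Otimes>\<^sub>M B) (E1 \<union> E2) + measure (B \<Otimes>\<^sub>M B) E3"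
    using h y by (intro BB.P.finite_measure_Union) (auto simp: E1_def E2_def E3_def)
  also have "measure (B \<Otimes>\<^sub>M B) (E1 \<union> E2) = measure (B \<Otimes>\<^sub>M B) E1 + measure (B \<Otimes>\<^sub>M B) E2"
    using h y by (intro BB.P.finite_measure_Union) (auto simp: E1_def E2_def E3_def)
  finally have "measure (B \<Otimes>\<^sub>M B) (E1 \<union> E2 \<union> E3) = 2 * tail B y * (1 - tail B h) + J h y"
    using m1 m2 by (simp add: J_def E3_def)
  moreover have "measure (B \<Otimes>\<^sub>M B) (E1 \<union> E2 \<union> E3) \<le> measure (B \<Otimes>\<^sub>M B) {p. y < fst p + snd p}"
    by (rule BB.P.finite_measure_mono[OF _ sum_set]) (use h y in \<open>auto simp: E1_def E2_def E3_def\<close>)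
  ultimately show ?thesis by (simp add: tailBB)
qed

lemma lowerL:
  assumes h: "0 \<le> h" and y: "h \<le> y"
  shows "tail B y + tail B y * (1 - tail B h) + tail B (y - h) * (tail B h - tail B y) \<le> tail (B \<star> B) y"
proof -
  define E1 where "E1 = {0::real..} \<times> {y<..}"
  define E2 where "E2 = {y<..} \<times> {0..h}"
  define E3 where "E3 = {y-h<..} \<times> {h<..y}"
  have [measurable]: "E1 \<in> sets (B \<Otimes>\<^sub>M B)" "E2 \<in> sets (B \<Otimes>\<^sub>M B)" "E3 \<in> sets (B \<Otimes>\<^sub>M B)"
    unfolding E1_def E2_def E3_def by measurable
  have m1: "measure (B \<Otimes>\<^sub>M B) E1 = tail B y"
    unfolding E1_def by (subst measure_pair_Times) (auto simp: prob nonneg_ae tail_def)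
  have m2: "measure (B \<Otimes>\<^sub>M B) E2 = tail B y * (1 - tail B h)"
    unfolding E2_def by (subst measure_pair_Times) (auto simp: prob measure_Icc0 h tail_def)
  have m3: "measure (B \<Otimes>\<^sub>M B) E3 = tail B (y - h) * (tail B h - tail B y)"
    unfolding E3_def by (subst measure_pair_Times) (auto simp: prob measure_Ioc y tail_def)
  have "measure (B \<Otimes>\<^sub>M B) (E1 \<union> E2 \<union> E3) = measure (B \<Otimes>\<^sub>M B) (E1 \<union> E2) + measure (B \<Otimes>\<^sub>M B) E3"
    using h y by (intro BB.P.finite_measure_Union) (auto simp: E1_def E2_def E3_def)
  also have "measure (B \<Otimes>\<^sub>M B) (E1 \<union> E2) = measure (B \<Otimes>\<^sub>M B) E1 + measure (B \<Otimes>\<^sub>M B) E2"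
    using h y by (intro BB.P.finite_measure_Union) (auto simp: E1_def E2_def E3_def)
  finally have "measure (B \<Otimes>\<^sub>M B) (E1 \<union> E2 \<union> E3) = tail B y + tail B y * (1 - tail B h) + tail B (y - h) * (tail B h - tail B y)"
    using m1 m2 m3 by simp
  moreover have "measure (B \<Otimes>\<^sub>M B) (E1 \<union> E2 \<union> E3) \<le> measure (B \<Otimes>\<^sub>M B) {p. y < fst p + snd p}"
    by (rule BB.P.finite_measure_mono[OF _ sum_set]) (use h y in \<open>auto simp: E1_def E2_def E3_def\<close>)
  ultimately show ?thesis by (simp add: tailBB)
qed


lemma pd_bound:
  obtains v \<gamma> x0 where "1 < v" "0 < \<gamma>" "\<gamma> < 1" "0 < x0" "\<And>x. x0 \<le> x \<Longrightarrow> tail B (v * x) \<le> \<gamma> * tail B x"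
proof -
  from pd obtain v where v: "1 < v" and L: "Limsup at_top (\<lambda>x. ereal (tail B (v * x) / tail B x)) < 1"
    unfolding PD_def by auto
  from ereal_dense2[OF L] obtain z where z1: "Limsup at_top (\<lambda>x. ereal (tail B (v * x) / tail B x)) < ereal z" and z2: "ereal z < 1"
    by auto
  from Limsup_lessD[OF z1] obtain x1 where x1: "\<And>x. x \<ge> x1 \<Longrightarrow> ereal (tail B (v * x) / tail B x) < ereal z"
    unfolding eventually_at_top_linorder by auto
  define x0 where "x0 = max x1 1"
  have b: "tail B (v * x) \<le> z * tail B x" if "x0 \<le> x" for x
  proof -
    have "tail B (v * x) / tail B x < z" using x1[of x] that by (auto simp: x0_def)
    then show ?thesis using pos[of x] by (simp add: divide_less_eq)
  qed
  have "0 < z"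
  proof -
    have "0 < tail B (v * x0)" by (rule pos)
    also have "\<dots> \<le> z * tail B x0" by (rule b) simp
    finally show ?thesis using pos[of x0] by (simp add: zero_less_mult_iff)
  qed
  show ?thesis
    by (rule that[of v z x0]) (use v z2 \<open>0 < z\<close> b in \<open>auto simp: x0_def\<close>)
qed

lemma pd_iter:
  assumes "1 < v" "0 < \<gamma>" "0 < x0" "\<And>x. x0 \<le> x \<Longrightarrow> tail B (v * x) \<le> \<gamma> * tail B x"
  shows "x0 \<le> x \<Longrightarrow> tail B (v ^ k * x) \<le> \<gamma> ^ k * tail B x"
proof (induction k)
  case 0 then show ?case by simp
next
  case (Suc k)
  have "x \<le> v ^ k * x" using Suc.prems assms(1,3) by (simp add: mult_le_cancel_right1)
  then have "tail B (v * (v ^ k * x)) \<le> \<gamma> * tail B (v ^ k * x)"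
    using Suc.prems by (intro assms(4)) simp
  also have "\<dots> \<le> \<gamma> * (\<gamma> ^ k * tail B x)"
    using Suc assms(2) by (intro mult_left_mono) auto
  finally show ?case by (simp add: mult.assoc)
qed

lemma small_scale:
  obtains x0 where "0 < x0" "\<And>\<delta>. 0 < \<delta> \<Longrightarrow> \<exists>\<eta>>0. \<forall>x\<ge>x0. \<forall>w. 0 < w \<and> w \<le> \<eta> \<longrightarrow> tail B (x / w) \<le> \<delta> * tail B x"
proof -
  obtain v \<gamma> x0 where v: "1 < v" "0 < \<gamma>" "\<gamma> < 1" "0 < x0" "\<And>x. x0 \<le> x \<Longrightarrow> tail B (v * x) \<le> \<gamma> * tail B x"
    using pd_bound by blast
  show ?thesis
  proof (rule that[OF v(4)])
    fix \<delta> :: real assume d: "0 < \<delta>"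
    obtain k where k: "\<gamma> ^ k < \<delta>" using real_arch_pow_inv[OF d v(3)] by auto
    show "\<exists>\<eta>>0. \<forall>x\<ge>x0. \<forall>w. 0 < w \<and> w \<le> \<eta> \<longrightarrow> tail B (x / w) \<le> \<delta> * tail B x"
    proof (intro exI[of _ "1 / v ^ k"] conjI allI impI)
      show "0 < 1 / v ^ k" using v by simp
      fix x w assume x: "x0 \<le> x" and w: "0 < w \<and> w \<le> 1 / v ^ k"
      have "v ^ k * x \<le> x / w"
        using w x v by (auto simp: field_simps)
      then have "tail B (x / w) \<le> tail B (v ^ k * x)" by (rule tail_mono)
      also have "\<dots> \<le> \<gamma> ^ k * tail B x" by (rule pd_iter[OF v(1,2,4,5) x])
      also have "\<dots> \<le> \<delta> * tail B x" using k tail_nonneg by (intro mult_right_mono) auto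
      finally show "tail B (x / w) \<le> \<delta> * tail B x" .
    qed
  qed
qed

lemma tail_to0: "(tail B \<longlongrightarrow> 0) at_top"
proof -
  obtain v \<gamma> x0 where v: "1 < v" "0 < \<gamma>" "\<gamma> < 1" "0 < x0" "\<And>x. x0 \<le> x \<Longrightarrow> tail B (v * x) \<le> \<gamma> * tail B x"
    using pd_bound by blast
  show ?thesis
  proof (rule order_tendstoI)
    fix a :: real assume "a < 0" then show "eventually (\<lambda>x. a < tail B x) at_top"
      using tail_nonneg by (intro always_eventually) (auto intro: less_le_trans)
  next
    fix a :: real assume a: "0 < a"
    obtain k where k: "\<gamma> ^ k < a" using real_arch_pow_inv[OF a v(3)] by auto
    show "eventually (\<lambda>x. tail B x < a) at_top"
      unfolding eventually_at_top_linorder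
    proof (intro exI[of _ "v ^ k * x0"] allI impI)
      fix y assume y: "v ^ k * x0 \<le> y"
      have "tail B y \<le> tail B (v ^ k * x0)" by (rule tail_mono[OF y])
      also have "\<dots> \<le> \<gamma> ^ k * tail B x0" using pd_iter[OF v(1,2,4,5), of x0 k] by simp
      also have "\<dots> \<le> \<gamma> ^ k" using tail_le1[of x0] v by (simp add: mult_left_le)
      finally show "tail B y < a" using k by simp
    qed
  qed
qed

lemma long_tail:
  assumes h: "0 \<le> h" and e: "0 < \<epsilon>"
  shows "eventually (\<lambda>y. tail B (y - h) \<le> (1 + \<epsilon>) * tail B y) at_top"
proof -
  define f where "f y = (tail (B \<star> B) y / tail B y - 2 + tail B h) / (tail B h - tail B y)" for y
  have "(f \<longlongrightarrow> (2 - 2 + tail B h) / (tail B h - 0)) at_top"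
    unfolding f_def using pos[of h]
    by (intro tendsto_intros ratio tail_to0) auto
  then have "(f \<longlongrightarrow> 1) at_top" using pos[of h] by simp
  then have ev1: "eventually (\<lambda>y. f y < 1 + \<epsilon>) at_top"
    using e by (intro order_tendstoD) auto
  have ev2: "eventually (\<lambda>y. tail B y < tail B h) at_top"
    using pos[of h] by (intro order_tendstoD[OF tail_to0])
  have ev3: "eventually (\<lambda>y. h \<le> y) at_top" by (rule eventually_ge_at_top)
  show ?thesis
    using ev1 ev2 ev3
  proof eventually_elim
    case (elim y)
    have L: "tail B y + tail B y * (1 - tail B h) + tail B (y - h) * (tail B h - tail B y) \<le> tail (B \<star> B) y"
      by (rule lowerL[OF h elim(3)])
    have gy: "0 < tail B y" by (rule pos)
    have "tail B (y - h) * (tail B h - tail B y) \<le> tail B y * (tail (B \<star> B) y / tail B y - 2 + tail B h)"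
      using L gy by (simp add: algebra_simps)
    then have "tail B (y - h) \<le> tail B y * (tail (B \<star> B) y / tail B y - 2 + tail B h) / (tail B h - tail B y)"
      using elim(2) by (simp add: le_divide_eq)
    also have "\<dots> = tail B y * f y" unfolding f_def by simp
    also have "\<dots> \<le> tail B y * (1 + \<epsilon>)" using elim(1) gy by (intro mult_left_mono) auto
    finally show ?case by (simp add: mult.commute)
  qed
qed

lemma J_small:
  assumes e: "0 < \<epsilon>"
  obtains h0 where "0 \<le> h0" "\<And>h. h0 \<le> h \<Longrightarrow> eventually (\<lambda>y. J h y \<le> \<epsilon> * tail B y) at_top"
proof -
  have "eventually (\<lambda>h. tail B h < \<epsilon> / 4) at_top"
    using e by (intro order_tendstoD[OF tail_to0]) auto
  then obtain h1 where h1: "\<And>h. h \<ge> h1 \<Longrightarrow> tail B h < \<epsilon> / 4"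
    unfolding eventually_at_top_linorder by auto
  show ?thesis
  proof (rule that[of "max h1 0"])
    fix h assume hh: "max h1 0 \<le> h"
    have ev1: "eventually (\<lambda>y. tail (B \<star> B) y / tail B y < 2 + \<epsilon> / 2) at_top"
      using e by (intro order_tendstoD[OF ratio]) auto
    have ev2: "eventually (\<lambda>y. 2 * h < y) at_top" by (rule eventually_gt_at_top)
    show "eventually (\<lambda>y. J h y \<le> \<epsilon> * tail B y) at_top"
      using ev1 ev2
    proof eventually_elim
      case (elim y)
      have gy: "0 < tail B y" by (rule pos)
      have L: "2 * tail B y * (1 - tail B h) + J h y \<le> tail (B \<star> B) y"
        using hh elim(2) by (intro lowerJ) auto
      have "tail (B \<star> B) y < (2 + \<epsilon> / 2) * tail B y"
        using elim(1) gy by (simp add: divide_less_eq)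
      moreover have "tail B h < \<epsilon> / 4" using h1 hh by auto
      ultimately have "J h y < \<epsilon> / 2 * tail B y + 2 * tail B y * tail B h"
        using L by (simp add: algebra_simps)
      also have "\<dots> \<le> \<epsilon> / 2 * tail B y + 2 * tail B y * (\<epsilon> / 4)"
        using \<open>tail B h < \<epsilon> / 4\<close> gy by (intro add_left_mono mult_left_mono) auto
      finally show ?case by (simp add: algebra_simps)
    qed
  qed simp
qed

end

definition Jset :: "real \<Rightarrow> real \<Rightarrow> (real \<times> real) set" where
  "Jset h y = {p. h < fst p \<and> h < snd p \<and> y < fst p + snd p}"

lemma Jset_sets[simp]: "Jset h y \<in> sets (borel \<Otimes>\<^sub>M borel)"
  unfolding Jset_def by (rule pred_set2) measurable

lemma Jset_Pair: "Pair a -` Jset h y = (if h < a then {max h (y - a)<..} else {})"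
  by (auto simp: Jset_def)

lemma Jset_Pair2: "(\<lambda>b. (b, a)) -` Jset h y = (if h < a then {max h (y - a)<..} else {})"
  by (auto simp: Jset_def)

lemma repl2:
  fixes M1 P Q :: "real measure"
  assumes M1: "prob_space M1" "sets M1 = sets borel"
    and P: "prob_space P" "sets P = sets borel" and Q: "prob_space Q" "sets Q = sets borel"
    and K: "0 \<le> K" and h: "0 \<le> h"
    and bnd: "\<And>t. h \<le> t \<Longrightarrow> measure P {t<..} \<le> K * measure Q {t<..}"
  shows "measure (M1 \<Otimes>\<^sub>M P) (Jset h y) \<le> K * measure (M1 \<Otimes>\<^sub>M Q) (Jset h y)"
proof -
  interpret M1: prob_space M1 by fact
  interpret P: prob_space P by fact
  interpret Q: prob_space Q by fact
  interpret MP: pair_prob_space M1 P ..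
  interpret MQ: pair_prob_space M1 Q ..
  have sE1: "Jset h y \<in> sets (M1 \<Otimes>\<^sub>M P)"
    using Jset_sets[of h y] by (subst sets_pair_measure_cong[OF M1(2) P(2)])
  have sE2: "Jset h y \<in> sets (M1 \<Otimes>\<^sub>M Q)"
    using Jset_sets[of h y] by (subst sets_pair_measure_cong[OF M1(2) Q(2)])
  have eb: "emeasure P (Pair a -` Jset h y) \<le> ennreal K * emeasure Q (Pair a -` Jset h y)" for a
  proof (cases "h < a")
    case True
    have "emeasure P {max h (y - a)<..} = ennreal (measure P {max h (y - a)<..})"
      by (simp add: P.emeasure_eq_measure)
    also have "\<dots> \<le> ennreal (K * measure Q {max h (y - a)<..})"
      by (intro ennreal_leI bnd) simp
    also have "\<dots> = ennreal K * emeasure Q {max h (y - a)<..}"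
      using K by (simp add: Q.emeasure_eq_measure ennreal_mult)
    finally show ?thesis using True by (simp add: Jset_Pair)
  qed (simp add: Jset_Pair)
  have "emeasure (M1 \<Otimes>\<^sub>M P) (Jset h y) = (\<integral>\<^sup>+a. emeasure P (Pair a -` Jset h y) \<partial>M1)"
    by (rule P.emeasure_pair_measure_alt[OF sE1])
  also have "\<dots> \<le> (\<integral>\<^sup>+a. ennreal K * emeasure Q (Pair a -` Jset h y) \<partial>M1)"
    by (intro nn_integral_mono eb)
  also have "\<dots> = ennreal K * (\<integral>\<^sup>+a. emeasure Q (Pair a -` Jset h y) \<partial>M1)"
    by (rule nn_integral_cmult[OF MQ.measurable_emeasure_Pair1[OF sE2]])
  also have "(\<integral>\<^sup>+a. emeasure Q (Pair a -` Jset h y) \<partial>M1) = emeasure (M1 \<Otimes>\<^sub>M Q) (Jset h y)"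
    by (rule Q.emeasure_pair_measure_alt[OF sE2, symmetric])
  finally have "ennreal (measure (M1 \<Otimes>\<^sub>M P) (Jset h y)) \<le> ennreal K * ennreal (measure (M1 \<Otimes>\<^sub>M Q) (Jset h y))"
    by (simp only: MP.P.emeasure_eq_measure MQ.P.emeasure_eq_measure)
  also have "\<dots> = ennreal (K * measure (M1 \<Otimes>\<^sub>M Q) (Jset h y))"
    by (rule ennreal_mult[symmetric, OF K]) simp
  finally show ?thesis
    by (rule ennreal_le_iff[THEN iffD1, rotated]) (use K in simp)
qed

lemma repl1:
  fixes M2 P Q :: "real measure"
  assumes M2: "prob_space M2" "sets M2 = sets borel"
    and P: "prob_space P" "sets P = sets borel" and Q: "prob_space Q" "sets Q = sets borel"
    and K: "0 \<le> K" and h: "0 \<le> h"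
    and bnd: "\<And>t. h \<le> t \<Longrightarrow> measure P {t<..} \<le> K * measure Q {t<..}"
  shows "measure (P \<Otimes>\<^sub>M M2) (Jset h y) \<le> K * measure (Q \<Otimes>\<^sub>M M2) (Jset h y)"
proof -
  interpret M2: prob_space M2 by fact
  interpret P: prob_space P by fact
  interpret Q: prob_space Q by fact
  interpret MP: pair_prob_space P M2 ..
  interpret MQ: pair_prob_space Q M2 ..
  have sE1: "Jset h y \<in> sets (P \<Otimes>\<^sub>M M2)"
    using Jset_sets[of h y] by (subst sets_pair_measure_cong[OF P(2) M2(2)])
  have sE2: "Jset h y \<in> sets (Q \<Otimes>\<^sub>M M2)"
    using Jset_sets[of h y] by (subst sets_pair_measure_cong[OF Q(2) M2(2)])
  have eb: "emeasure P ((\<lambda>b. (b, a)) -` Jset h y) \<le> ennreal K * emeasure Q ((\<lambda>b. (b, a)) -` Jset h y)" for a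
  proof (cases "h < a")
    case True
    have "emeasure P {max h (y - a)<..} = ennreal (measure P {max h (y - a)<..})"
      by (simp add: P.emeasure_eq_measure)
    also have "\<dots> \<le> ennreal (K * measure Q {max h (y - a)<..})"
      by (intro ennreal_leI bnd) simp
    also have "\<dots> = ennreal K * emeasure Q {max h (y - a)<..}"
      using K by (simp add: Q.emeasure_eq_measure ennreal_mult)
    finally show ?thesis using True by (simp add: Jset_Pair2)
  qed (simp add: Jset_Pair2)
  have "emeasure (P \<Otimes>\<^sub>M M2) (Jset h y) = (\<integral>\<^sup>+a. emeasure P ((\<lambda>b. (b, a)) -` Jset h y) \<partial>M2)"
    by (rule MP.emeasure_pair_measure_alt2[OF sE1])
  also have "\<dots> \<le> (\<integral>\<^sup>+a. ennreal K * emeasure Q ((\<lambda>b. (b, a)) -` Jset h y) \<partial>M2)"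
    by (intro nn_integral_mono eb)
  also have "\<dots> = ennreal K * (\<integral>\<^sup>+a. emeasure Q ((\<lambda>b. (b, a)) -` Jset h y) \<partial>M2)"
    by (rule nn_integral_cmult[OF MQ.measurable_emeasure_Pair2[OF sE2]])
  also have "(\<integral>\<^sup>+a. emeasure Q ((\<lambda>b. (b, a)) -` Jset h y) \<partial>M2) = emeasure (Q \<Otimes>\<^sub>M M2) (Jset h y)"
    by (rule MQ.emeasure_pair_measure_alt2[OF sE2, symmetric])
  finally have "ennreal (measure (P \<Otimes>\<^sub>M M2) (Jset h y)) \<le> ennreal K * ennreal (measure (Q \<Otimes>\<^sub>M M2) (Jset h y))"
    by (simp only: MP.P.emeasure_eq_measure MQ.P.emeasure_eq_measure)
  also have "\<dots> = ennreal (K * measure (Q \<Otimes>\<^sub>M M2) (Jset h y))"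
    by (rule ennreal_mult[symmetric, OF K]) simp
  finally show ?thesis
    by (rule ennreal_le_iff[THEN iffD1, rotated]) (use K in simp)
qed


lemma ev_shift: "eventually P at_top \<Longrightarrow> eventually (\<lambda>y. P (y - (h::real))) at_top"
  unfolding eventually_at_top_linorder
  by (metis add.commute diff_add_cancel le_diff_eq)

locale oned = prob_space M for M :: "'w measure" +
  fixes X :: "nat \<Rightarrow> 'w \<Rightarrow> real" and N n :: nat and K x0 :: real
  assumes indep: "indep_vars (\<lambda>_. borel) X {1..N}"
    and nonneg: "\<And>l \<omega>. l \<in> {1..N} \<Longrightarrow> \<omega> \<in> space M \<Longrightarrow> 0 \<le> X l \<omega>"
    and heavy: "\<And>l. l \<in> {1..n} \<Longrightarrow> tailB (distr M borel (X l))"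
    and n1: "1 \<le> n" and nN: "n \<le> N" and K1: "1 \<le> K" and x0: "0 \<le> x0"
    and upper: "\<And>l t. l \<in> {1..N} \<Longrightarrow> x0 \<le> t \<Longrightarrow> tail (distr M borel (X l)) t \<le> K * tail (distr M borel (X 1)) t"
    and light: "\<And>l \<delta>. l \<in> {n+1..N} \<Longrightarrow> 0 < \<delta> \<Longrightarrow>
       eventually (\<lambda>t. tail (distr M borel (X l)) t \<le> \<delta> * tail (distr M borel (X 1)) t) at_top"
begin

abbreviation "G l \<equiv> tail (distr M borel (X l))"
abbreviation "B1 \<equiv> distr M borel (X 1)"

lemma rv[measurable]: "l \<in> {1..N} \<Longrightarrow> X l \<in> borel_measurable M"
  using indep unfolding indep_vars_def by auto

lemma G_eq: "l \<in> {1..N} \<Longrightarrow> G l t = prob {\<omega> \<in> space M. t < X l \<omega>}"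
  unfolding tail_def by (subst measure_distr[OF rv]) (auto intro!: arg_cong[where f=prob])

lemma G_nonneg: "0 \<le> G l t"
  unfolding tail_def by simp

lemma G_mono: "l \<in> {1..N} \<Longrightarrow> s \<le> t \<Longrightarrow> G l t \<le> G l s"
  unfolding G_eq by (intro finite_measure_mono) (auto intro!: rv)

lemma G_scale: "l \<in> {1..N} \<Longrightarrow> 0 < w \<Longrightarrow> prob {\<omega> \<in> space M. t < w * X l \<omega>} = G l (t / w)"
  unfolding G_eq by (auto intro!: arg_cong[where f=prob] simp: field_simps)

lemma G_le: "l \<in> {1..N} \<Longrightarrow> 0 \<le> w \<Longrightarrow> w \<le> 1 \<Longrightarrow> 0 \<le> t \<Longrightarrow>
    prob {\<omega> \<in> space M. t < w * X l \<omega>} \<le> G l t"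
  unfolding G_eq
proof (intro finite_measure_mono)
  assume l: "l \<in> {1..N}" and w: "0 \<le> w" "w \<le> 1" and t: "0 \<le> t"
  show "{\<omega> \<in> space M. t < w * X l \<omega>} \<subseteq> {\<omega> \<in> space M. t < X l \<omega>}"
  proof safe
    fix \<omega> assume "\<omega> \<in> space M" "t < w * X l \<omega>"
    moreover have "w * X l \<omega> \<le> X l \<omega>"
      using nonneg[OF l \<open>\<omega> \<in> space M\<close>] w by (simp add: mult_left_le_one_le)
    ultimately show "t < X l \<omega>" by simp
  qed
  show "{\<omega> \<in> space M. t < X l \<omega>} \<in> events" using l by measurable
qed

lemma shift:
  assumes l: "l \<in> {1..n}" and h: "0 \<le> h" and d: "0 < \<delta>"
  shows "eventually (\<lambda>y. \<forall>w. 0 < w \<and> w \<le> 1 \<longrightarrow> G l ((y - h) / w) \<le> (1 + \<delta>) * G l (y / w) + \<delta> * G 1 y) at_top"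
proof -
  have lN: "l \<in> {1..N}" using l nN by auto
  have oN: "1 \<in> {1..N}" using n1 nN by auto
  interpret T1: tailB B1 using heavy[of 1] n1 by auto
  interpret Tl: tailB "distr M borel (X l)" using heavy[OF l] .
  obtain x1 where x1: "0 < x1" and SS: "\<And>\<delta>. 0 < \<delta> \<Longrightarrow> \<exists>\<eta>>0. \<forall>x\<ge>x1. \<forall>w. 0 < w \<and> w \<le> \<eta> \<longrightarrow> G 1 (x / w) \<le> \<delta> * G 1 x"
    using T1.small_scale by blast
  obtain \<eta> where eta: "\<eta> > 0" and ss: "\<And>x w. x \<ge> x1 \<Longrightarrow> 0 < w \<Longrightarrow> w \<le> \<eta> \<Longrightarrow> G 1 (x / w) \<le> \<delta> / (2 * K) * G 1 x"
    using SS[of "\<delta> / (2 * K)"] d K1 by auto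
  obtain z0 where z0: "\<And>z. z \<ge> z0 \<Longrightarrow> G l (z - h / \<eta>) \<le> (1 + \<delta>) * G l z"
    using Tl.long_tail[of "h / \<eta>" \<delta>] h eta d unfolding eventually_at_top_linorder by auto
  have ev1: "eventually (\<lambda>y. G 1 (y - h) \<le> (1 + 1) * G 1 y) at_top"
    using T1.long_tail[of h 1] h by simp
  have ev2: "eventually (\<lambda>y. y \<ge> h + x0 + x1 + max z0 0) at_top" by (rule eventually_ge_at_top)
  show ?thesis using ev1 ev2
  proof eventually_elim
    case (elim y)
    show ?case
    proof (intro allI impI)
      fix w :: real assume w: "0 < w \<and> w \<le> 1"
      show "G l ((y - h) / w) \<le> (1 + \<delta>) * G l (y / w) + \<delta> * G 1 y"
      proof (cases "w \<le> \<eta>")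
        case True
        have yh: "x0 \<le> y - h" "x1 \<le> y - h" using elim(2) x0 x1 max.cobounded2[of 0 z0] by auto
        have "y - h \<le> (y - h) / w" using w yh x0 by (simp add: le_divide_eq mult_left_le)
        then have "G l ((y - h) / w) \<le> K * G 1 ((y - h) / w)"
          using yh by (intro upper lN) simp
        also have "\<dots> \<le> K * (\<delta> / (2 * K) * G 1 (y - h))"
          using K1 yh w True by (intro mult_left_mono ss) auto
        also have "\<dots> \<le> K * (\<delta> / (2 * K) * (2 * G 1 y))"
          using K1 d elim(1) by (intro mult_left_mono) auto
        also have "\<dots> = \<delta> * G 1 y" using K1 by simp
        finally show ?thesis using G_nonneg[of l "y / w"] d by (simp add: add_increasing)
      next
        case False
        have "y / w - h / \<eta> \<le> (y - h) / w"
        proof -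
          have "h / w \<le> h / \<eta>" using False h eta w by (intro divide_left_mono) auto
          then show ?thesis by (simp add: diff_divide_distrib)
        qed
        then have "G l ((y - h) / w) \<le> G l (y / w - h / \<eta>)" by (rule G_mono[OF lN])
        also have "\<dots> \<le> (1 + \<delta>) * G l (y / w)"
        proof (rule z0)
          have y0: "0 \<le> y" using elim(2) x0 x1 h max.cobounded2[of 0 z0] by linarith
          have "y \<le> y / w" using w y0 by (simp add: le_divide_eq mult_left_le)
          then show "z0 \<le> y / w" using elim(2) x0 x1 h max.cobounded1[of z0 0] by linarith
        qed
        finally show ?thesis using G_nonneg[of 1 y] d by (simp add: add_increasing2)
      qed
    qed
  qed
qed


definition adm :: "nat set \<Rightarrow> (nat \<Rightarrow> real) \<Rightarrow> bool" where
  "adm I w \<longleftrightarrow> (\<forall>l\<in>I. 0 \<le> w l \<and> w l \<le> 1 \<and> (l \<le> n \<longrightarrow> 0 < w l))"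

definition S :: "nat set \<Rightarrow> (nat \<Rightarrow> real) \<Rightarrow> 'w \<Rightarrow> real" where
  "S I w \<omega> = (\<Sum>l\<in>I. w l * X l \<omega>)"

definition Hs :: "nat set \<Rightarrow> (nat \<Rightarrow> real) \<Rightarrow> real \<Rightarrow> real" where
  "Hs I w y = (\<Sum>l\<in>I \<inter> {1..n}. G l (y / w l))"

lemma S_meas[measurable]: "I \<subseteq> {1..N} \<Longrightarrow> S I w \<in> borel_measurable M"
  unfolding S_def by (intro borel_measurable_sum borel_measurable_times) (auto intro: rv)

lemma Hs_nonneg: "0 \<le> Hs I w y"
  unfolding Hs_def by (intro sum_nonneg) (simp add: G_nonneg)

lemma indep_WU:
  assumes I: "finite I" "k \<notin> I" "insert k I \<subseteq> {1..N}"
  shows "indep_var borel (\<lambda>\<omega>. w k * X k \<omega>) borel (S I w)"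
proof -
  have "indep_vars (\<lambda>_. borel) (\<lambda>l \<omega>. w l * X l \<omega>) (insert k I)"
    by (rule indep_vars_compose2[OF indep_vars_subset[OF indep I(3)]]) simp
  from indep_vars_sum[OF I(1,2) this] show ?thesis unfolding S_def .
qed

lemma third:
  assumes I: "finite I" "k \<notin> I" "insert k I \<subseteq> {1..N}" and w: "adm (insert k I) w"
    and h: "x0 \<le> h" and K2: "0 \<le> K2"
    and bU: "\<And>t. h \<le> t \<Longrightarrow> prob {\<omega> \<in> space M. t < S I w \<omega>} \<le> K2 * G 1 t"
  shows "prob {\<omega> \<in> space M. h < w k * X k \<omega> \<and> h < S I w \<omega> \<and> y < w k * X k \<omega> + S I w \<omega>}
          \<le> K * (K2 * measure (B1 \<Otimes>\<^sub>M B1) (Jset h y))"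
proof -
  define W where "W = (\<lambda>\<omega>. w k * X k \<omega>)"
  have k: "k \<in> {1..N}" "I \<subseteq> {1..N}" using I by auto
  have oN: "1 \<in> {1..N}" using n1 nN by auto
  have Wm[measurable]: "W \<in> borel_measurable M" unfolding W_def using k by measurable
  have [measurable]: "S I w \<in> borel_measurable M" using k by measurable
  have ind: "indep_var borel W borel (S I w)" unfolding W_def by (rule indep_WU[OF I])
  have eqd: "distr M borel W \<Otimes>\<^sub>M distr M borel (S I w) = distr M (borel \<Otimes>\<^sub>M borel) (\<lambda>x. (W x, S I w x))"
    using ind by (simp add: indep_var_distribution_eq)
  have "prob {\<omega> \<in> space M. h < W \<omega> \<and> h < S I w \<omega> \<and> y < W \<omega> + S I w \<omega>}
      = measure (distr M (borel \<Otimes>\<^sub>M borel) (\<lambda>x. (W x, S I w x))) (Jset h y)"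
    by (subst measure_distr[OF _ Jset_sets]) (auto simp: Jset_def intro!: arg_cong[where f=prob])
  also have "\<dots> = measure (distr M borel W \<Otimes>\<^sub>M distr M borel (S I w)) (Jset h y)"
    by (simp add: eqd)
  also have "\<dots> \<le> K2 * measure (distr M borel W \<Otimes>\<^sub>M B1) (Jset h y)"
  proof (rule repl2)
    show "prob_space (distr M borel W)" "prob_space (distr M borel (S I w))" "prob_space B1"
      using oN by (auto intro!: prob_space_distr)
    show "0 \<le> h" using h x0 by simp
    fix t assume t: "h \<le> t"
    have "measure (distr M borel (S I w)) {t<..} = prob {\<omega> \<in> space M. t < S I w \<omega>}"
      by (subst measure_distr) (auto intro!: arg_cong[where f=prob])
    also have "\<dots> \<le> K2 * G 1 t" by (rule bU[OF t])
    finally show "measure (distr M borel (S I w)) {t<..} \<le> K2 * measure B1 {t<..}"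
      unfolding tail_def .
  qed (use K2 in auto)
  also have "\<dots> \<le> K2 * (K * measure (B1 \<Otimes>\<^sub>M B1) (Jset h y))"
  proof (intro mult_left_mono K2 repl1)
    show "prob_space (distr M borel W)" "prob_space B1"
      using oN by (auto intro!: prob_space_distr)
    show "0 \<le> h" using h x0 by simp
    show "0 \<le> K" using K1 by simp
    fix t assume t: "h \<le> t"
    have wk: "0 \<le> w k" "w k \<le> 1" using w unfolding adm_def by auto
    have "measure (distr M borel W) {t<..} = prob {\<omega> \<in> space M. t < w k * X k \<omega>}"
      by (subst measure_distr[OF Wm]) (auto simp: W_def intro!: arg_cong[where f=prob])
    also have "\<dots> \<le> G k t" using t h x0 wk by (intro G_le k) auto
    also have "\<dots> \<le> K * G 1 t" using t h by (intro upper k) auto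
    finally show "measure (distr M borel W) {t<..} \<le> K * measure B1 {t<..}"
      unfolding tail_def .
  qed (use oN in \<open>auto intro!: prob_space_distr rv\<close>)
  finally show ?thesis unfolding W_def by (simp add: algebra_simps)
qed

end
context oned begin

definition claim :: "nat set \<Rightarrow> real \<Rightarrow> bool" where
  "claim I \<epsilon> \<longleftrightarrow> eventually (\<lambda>y. \<forall>w. adm I w \<longrightarrow>
      prob {\<omega> \<in> space M. y < S I w \<omega>} \<le> (1 + \<epsilon>) * Hs I w y + \<epsilon> * G 1 y) at_top"

lemma claim_mono: "claim I \<epsilon> \<Longrightarrow> \<epsilon> \<le> \<epsilon>' \<Longrightarrow> claim I \<epsilon>'"
  unfolding claim_def
proof (elim eventually_mono, intro allI impI)
  fix y w assume e: "\<epsilon> \<le> \<epsilon>'" and A: "\<forall>w. adm I w \<longrightarrow> prob {\<omega> \<in> space M. y < S I w \<omega>} \<le> (1 + \<epsilon>) * Hs I w y + \<epsilon> * G 1 y"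
    and w: "adm I w"
  have "(1 + \<epsilon>) * Hs I w y + \<epsilon> * G 1 y \<le> (1 + \<epsilon>') * Hs I w y + \<epsilon>' * G 1 y"
    using e Hs_nonneg[of I w y] G_nonneg[of 1 y] by (intro add_mono mult_right_mono) auto
  then show "prob {\<omega> \<in> space M. y < S I w \<omega>} \<le> (1 + \<epsilon>') * Hs I w y + \<epsilon>' * G 1 y"
    using A w by force
qed

lemma claim_empty: "0 < \<epsilon> \<Longrightarrow> claim {} \<epsilon>"
  unfolding claim_def
proof (rule eventually_mono[OF eventually_ge_at_top[of 0]], intro allI impI)
  fix y :: real and w assume y: "0 \<le> y" and e: "0 < \<epsilon>"
  have "{\<omega> \<in> space M. y < S {} w \<omega>} = {}" using y by (auto simp: S_def)
  then have "prob {\<omega> \<in> space M. y < S {} w \<omega>} = 0" by (simp only:) simp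
  then show "prob {\<omega> \<in> space M. y < S {} w \<omega>} \<le> (1 + \<epsilon>) * Hs {} w y + \<epsilon> * G 1 y"
    using e G_nonneg[of 1 y] by (simp add: Hs_def)
qed

lemma adm_insert: "adm (insert k I) w \<Longrightarrow> adm I w"
  unfolding adm_def by auto

lemma Hs_insert:
  assumes "finite I" "k \<notin> I" "1 \<le> k"
  shows "Hs (insert k I) w y = (if k \<le> n then G k (y / w k) else 0) + Hs I w y"
proof (cases "k \<le> n")
  case True
  then have "insert k I \<inter> {1..n} = insert k (I \<inter> {1..n})" using assms by auto
  then show ?thesis using True assms by (simp add: Hs_def)
next
  case False
  then have "insert k I \<inter> {1..n} = I \<inter> {1..n}" by auto
  then show ?thesis using False by (simp add: Hs_def)
qed


lemma claim_insert:
  assumes I: "finite I" "k \<notin> I" "insert k I \<subseteq> {1..N}"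
    and IH: "\<And>\<epsilon>. 0 < \<epsilon> \<Longrightarrow> claim I \<epsilon>" and e: "0 < \<epsilon>" "\<epsilon> \<le> 1"
  shows "claim (insert k I) \<epsilon>"
proof -
  define c where "c = real (card I)"
  have c0: "0 \<le> c" unfolding c_def by simp
  define \<delta> where "\<delta> = \<epsilon> / (2 * c + 4)"
  have d0: "0 < \<delta>" using e c0 unfolding \<delta>_def by simp
  have dc: "\<delta> * (2 * c + 4) = \<epsilon>" using c0 unfolding \<delta>_def by simp
  have dc': "\<epsilon> = 2 * (c * \<delta>) + 4 * \<delta>" using dc by (simp add: algebra_simps)
  have "0 \<le> c * \<delta>" using c0 d0 by simp
  then have d4: "4 * \<delta> \<le> \<epsilon>" using dc' by linarith
  have kN: "k \<in> {1..N}" and IN: "I \<subseteq> {1..N}" using I by auto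
  have oN: "1 \<in> {1..N}" using n1 nN by auto
  interpret T1: tailB B1 using heavy[of 1] n1 by auto
  obtain y1 where y1: "\<And>t w. t \<ge> y1 \<Longrightarrow> adm I w \<Longrightarrow> prob {\<omega> \<in> space M. t < S I w \<omega>} \<le> (1 + 1) * Hs I w t + 1 * G 1 t"
    using IH[of 1] unfolding claim_def eventually_at_top_linorder by auto
  define K2 where "K2 = 2 * c * K + 1"
  have K2: "0 < K2" using c0 K1 unfolding K2_def by (simp add: add_nonneg_pos)
  have bU: "prob {\<omega> \<in> space M. t < S I w \<omega>} \<le> K2 * G 1 t" if w: "adm I w" and t: "max y1 x0 \<le> t" for w t
  proof -
    have t0: "0 \<le> t" "x0 \<le> t" using t x0 by auto
    have "Hs I w t \<le> of_nat (card (I \<inter> {1..n})) * (K * G 1 t)"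
      unfolding Hs_def
    proof (rule sum_bounded_above)
      fix l assume l: "l \<in> I \<inter> {1..n}"
      then have lN: "l \<in> {1..N}" using IN by auto
      have wl: "0 < w l" "w l \<le> 1" using w l unfolding adm_def by auto
      have "t \<le> t / w l" using wl t0 by (simp add: le_divide_eq mult_left_le)
      then have "G l (t / w l) \<le> G l t" by (rule G_mono[OF lN])
      also have "\<dots> \<le> K * G 1 t" using t0 by (intro upper lN)
      finally show "G l (t / w l) \<le> K * G 1 t" .
    qed
    also have "\<dots> \<le> c * (K * G 1 t)"
      unfolding c_def using I(1) K1 G_nonneg[of 1 t]
      by (intro mult_right_mono) (auto intro: card_mono)
    finally have "Hs I w t \<le> c * (K * G 1 t)" .
    moreover have "prob {\<omega> \<in> space M. t < S I w \<omega>} \<le> 2 * Hs I w t + G 1 t"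
      using y1[OF _ w] t by simp
    ultimately show ?thesis unfolding K2_def by (simp add: algebra_simps)
  qed
  obtain h0 where h0: "0 \<le> h0" and Jsm: "\<And>h. h0 \<le> h \<Longrightarrow> eventually (\<lambda>y. T1.J h y \<le> \<delta> / (K * K2) * G 1 y) at_top"
    using T1.J_small[of "\<delta> / (K * K2)"] d0 K1 K2 by auto
  define h where "h = max h0 (max x0 y1)"
  have h: "0 \<le> h" "x0 \<le> h" "y1 \<le> h" "h0 \<le> h" using h0 x0 unfolding h_def by auto
  have evJ: "eventually (\<lambda>y. T1.J h y \<le> \<delta> / (K * K2) * G 1 y) at_top" by (rule Jsm[OF h(4)])
  have evG: "eventually (\<lambda>y. G 1 (y - h) \<le> (1 + 1) * G 1 y) at_top"
    using T1.long_tail[of h 1] h by simp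
  have evy: "eventually (\<lambda>y. h \<le> y) at_top" by (rule eventually_ge_at_top)
  have evk: "eventually (\<lambda>y. \<forall>w. adm (insert k I) w \<longrightarrow> prob {\<omega> \<in> space M. y - h < w k * X k \<omega>}
      \<le> (1 + \<delta>) * (if k \<le> n then G k (y / w k) else 0) + \<delta> * G 1 y) at_top"
  proof (cases "k \<le> n")
    case True
    then have kn: "k \<in> {1..n}" using kN by auto
    show ?thesis using shift[OF kn h(1) d0] evy
    proof eventually_elim
      case (elim y)
      show ?case
      proof (intro allI impI)
        fix w assume w: "adm (insert k I) w"
        then have wk: "0 < w k" "w k \<le> 1" using True unfolding adm_def by auto
        have "prob {\<omega> \<in> space M. y - h < w k * X k \<omega>} = G k ((y - h) / w k)"
          by (rule G_scale[OF kN wk(1)])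
        also have "\<dots> \<le> (1 + \<delta>) * G k (y / w k) + \<delta> * G 1 y" using elim(1) wk by auto
        finally show "prob {\<omega> \<in> space M. y - h < w k * X k \<omega>}
          \<le> (1 + \<delta>) * (if k \<le> n then G k (y / w k) else 0) + \<delta> * G 1 y" using True by simp
      qed
    qed
  next
    case False
    then have kl: "k \<in> {n+1..N}" using kN by auto
    have evl: "eventually (\<lambda>y. G k (y - h) \<le> \<delta> / 2 * G 1 (y - h)) at_top"
      using ev_shift[OF light[OF kl, of "\<delta> / 2"]] d0 by simp
    show ?thesis using evl evG evy
    proof eventually_elim
      case (elim y)
      show ?case
      proof (intro allI impI)
        fix w assume w: "adm (insert k I) w"
        then have wk: "0 \<le> w k" "w k \<le> 1" unfolding adm_def by auto
        have "prob {\<omega> \<in> space M. y - h < w k * X k \<omega>} \<le> G k (y - h)"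
          using wk elim(3) by (intro G_le kN) auto
        also have "\<dots> \<le> \<delta> / 2 * G 1 (y - h)" by (rule elim(1))
        also have "\<dots> \<le> \<delta> / 2 * (2 * G 1 y)" using elim(2) d0 by (intro mult_left_mono) auto
        finally show "prob {\<omega> \<in> space M. y - h < w k * X k \<omega>}
          \<le> (1 + \<delta>) * (if k \<le> n then G k (y / w k) else 0) + \<delta> * G 1 y" using False by simp
      qed
    qed
  qed
  have evU: "eventually (\<lambda>y. \<forall>w. adm I w \<longrightarrow> prob {\<omega> \<in> space M. y - h < S I w \<omega>}
      \<le> (1 + \<delta>) * Hs I w (y - h) + \<delta> * G 1 (y - h)) at_top"
    using ev_shift[OF IH[OF d0, unfolded claim_def]] .
  have evS: "eventually (\<lambda>y. \<forall>l\<in>I \<inter> {1..n}. \<forall>v. 0 < v \<and> v \<le> 1 \<longrightarrow>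
      G l ((y - h) / v) \<le> (1 + \<delta>) * G l (y / v) + \<delta> * G 1 y) at_top"
    using I(1) by (intro eventually_ball_finite ballI shift h(1) d0) auto
  show ?thesis unfolding claim_def using evJ evG evk evU evS
  proof eventually_elim
    case (elim y)
    show ?case
    proof (intro allI impI)
      fix w assume w: "adm (insert k I) w"
      have wI: "adm I w" using w by (rule adm_insert)
      define W where "W = (\<lambda>\<omega>. w k * X k \<omega>)"
      have [measurable]: "W \<in> borel_measurable M" unfolding W_def using kN by measurable
      have [measurable]: "S I w \<in> borel_measurable M" using IN by measurable
      have Sins: "S (insert k I) w \<omega> = W \<omega> + S I w \<omega>" for \<omega>
        unfolding S_def W_def using I by simp
      define A1 where "A1 = {\<omega> \<in> space M. y - h < W \<omega>}"
      define A2 where "A2 = {\<omega> \<in> space M. y - h < S I w \<omega>}"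
      define A3 where "A3 = {\<omega> \<in> space M. h < W \<omega> \<and> h < S I w \<omega> \<and> y < W \<omega> + S I w \<omega>}"
      have [measurable]: "A1 \<in> events" "A2 \<in> events" "A3 \<in> events"
        unfolding A1_def A2_def A3_def by measurable
      have "prob {\<omega> \<in> space M. y < S (insert k I) w \<omega>} \<le> prob (A1 \<union> A2 \<union> A3)"
        by (intro finite_measure_mono) (auto simp: Sins A1_def A2_def A3_def)
      also have "\<dots> \<le> prob (A1 \<union> A2) + prob A3" by (intro measure_subadditive) (auto simp: emeasure_eq_measure)
      also have "\<dots> \<le> prob A1 + prob A2 + prob A3" using measure_subadditive[of A1 M A2] by (simp add: emeasure_eq_measure)
      finally have P: "prob {\<omega> \<in> space M. y < S (insert k I) w \<omega>} \<le> prob A1 + prob A2 + prob A3" .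
      define a where "a = (if k \<le> n then G k (y / w k) else 0)"
      define b where "b = Hs I w y"
      define g where "g = G 1 y"
      have a0: "0 \<le> a" unfolding a_def using G_nonneg by simp
      have b0: "0 \<le> b" unfolding b_def by (rule Hs_nonneg)
      have g0: "0 \<le> g" unfolding g_def by (rule G_nonneg)
      have P1: "prob A1 \<le> (1 + \<delta>) * a + \<delta> * g"
        using elim(3) w unfolding A1_def W_def a_def g_def by auto
      have HsS: "Hs I w (y - h) \<le> (1 + \<delta>) * b + c * (\<delta> * g)"
      proof -
        have "Hs I w (y - h) \<le> (\<Sum>l\<in>I \<inter> {1..n}. (1 + \<delta>) * G l (y / w l) + \<delta> * G 1 y)"
          unfolding Hs_def
        proof (rule sum_mono)
          fix l assume l: "l \<in> I \<inter> {1..n}"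
          then have "0 < w l \<and> w l \<le> 1" using wI unfolding adm_def by auto
          then show "G l ((y - h) / w l) \<le> (1 + \<delta>) * G l (y / w l) + \<delta> * G 1 y"
            using elim(5) l by auto
        qed
        also have "\<dots> = (1 + \<delta>) * b + of_nat (card (I \<inter> {1..n})) * (\<delta> * g)"
          by (simp add: sum.distrib sum_distrib_left b_def g_def Hs_def)
        also have "\<dots> \<le> (1 + \<delta>) * b + c * (\<delta> * g)"
          unfolding c_def using I(1) d0 g0
          by (intro add_left_mono mult_right_mono) (auto intro: card_mono)
        finally show ?thesis .
      qed
      have P2: "prob A2 \<le> (1 + \<delta>) * ((1 + \<delta>) * b + c * (\<delta> * g)) + \<delta> * (2 * g)"
      proof -
        have "prob A2 \<le> (1 + \<delta>) * Hs I w (y - h) + \<delta> * G 1 (y - h)"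
          using elim(4) wI unfolding A2_def by auto
        also have "\<dots> \<le> (1 + \<delta>) * ((1 + \<delta>) * b + c * (\<delta> * g)) + \<delta> * (2 * g)"
          using HsS elim(2) d0 unfolding g_def by (intro add_mono mult_left_mono) auto
        finally show ?thesis .
      qed
      have P3: "prob A3 \<le> \<delta> * g"
      proof -
        have "prob A3 \<le> K * (K2 * measure (B1 \<Otimes>\<^sub>M B1) (Jset h y))"
          unfolding A3_def W_def
        proof (rule third[OF I w h(2) less_imp_le[OF K2]])
          fix t assume "h \<le> t"
          then have "max y1 x0 \<le> t" using h by auto
          then show "prob {\<omega> \<in> space M. t < S I w \<omega>} \<le> K2 * G 1 t" by (rule bU[OF wI])
        qed
        also have "measure (B1 \<Otimes>\<^sub>M B1) (Jset h y) = T1.J h y"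
          unfolding T1.J_def Jset_def ..
        also have "K * (K2 * T1.J h y) \<le> K * (K2 * (\<delta> / (K * K2) * G 1 y))"
          using elim(1) K1 K2 by (intro mult_left_mono) auto
        also have "\<dots> = \<delta> * g" using K1 K2 unfolding g_def by simp
        finally show ?thesis .
      qed
      have Hs_ins: "Hs (insert k I) w y = a + b"
        unfolding a_def b_def using I kN by (intro Hs_insert) auto
      have q1: "(1 + \<delta>) * a \<le> (1 + \<epsilon>) * a" using d4 d0 a0 by (intro mult_right_mono) auto
      have dd: "\<delta> * \<delta> \<le> \<delta>" using d4 e d0 by (intro mult_left_le) auto
      have q2: "(1 + \<delta>) * ((1 + \<delta>) * b) \<le> (1 + \<epsilon>) * b"
      proof -
        have "(1 + \<delta>) * (1 + \<delta>) = 1 + 2 * \<delta> + \<delta> * \<delta>" by (simp add: algebra_simps)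
        then have "(1 + \<delta>) * (1 + \<delta>) \<le> 1 + \<epsilon>" using dd d4 d0 by linarith
        then show ?thesis using b0 by (simp add: mult.assoc[symmetric] mult_right_mono)
      qed
      have q3: "(1 + \<delta>) * (c * (\<delta> * g)) \<le> 2 * (c * (\<delta> * g))"
        using d4 e c0 d0 g0 by (intro mult_right_mono) auto
      have q4': "2 * (c * (\<delta> * g)) + 4 * (\<delta> * g) = (\<delta> * (2 * c + 4)) * g"
        by (simp add: algebra_simps)
      have q4: "2 * (c * (\<delta> * g)) + 4 * (\<delta> * g) = \<epsilon> * g"
        using q4' dc by simp
      have P2': "prob A2 \<le> (1 + \<delta>) * ((1 + \<delta>) * b) + (1 + \<delta>) * (c * (\<delta> * g)) + 2 * (\<delta> * g)"
        using P2 by (simp add: distrib_left)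
      have q5: "(1 + \<epsilon>) * (a + b) = (1 + \<epsilon>) * a + (1 + \<epsilon>) * b" by (simp add: distrib_left)
      have "prob {\<omega> \<in> space M. y < S (insert k I) w \<omega>} \<le> (1 + \<epsilon>) * (a + b) + \<epsilon> * g"
        using P P1 P2' P3 q1 q2 q3 q4 q5 by linarith
      then show "prob {\<omega> \<in> space M. y < S (insert k I) w \<omega>} \<le> (1 + \<epsilon>) * Hs (insert k I) w y + \<epsilon> * G 1 y"
        unfolding Hs_ins g_def .
    qed
  qed
qed


lemma claim_all: "finite I \<Longrightarrow> I \<subseteq> {1..N} \<Longrightarrow> 0 < \<epsilon> \<Longrightarrow> claim I \<epsilon>"
proof (induction I arbitrary: \<epsilon> rule: finite_induct)
  case empty
  then show ?case using claim_empty by simp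
next
  case (insert k I)
  have "claim (insert k I) (min \<epsilon> 1)"
    using insert by (intro claim_insert) auto
  then show ?case by (rule claim_mono) simp
qed

end


locale geo =
  fixes A :: "(real ^ 'd) set"
  assumes R: "classR A"
begin

lemma A_open: "open A" and A_inc: "\<And>z y. z \<in> A \<Longrightarrow> (\<forall>k. 0 \<le> y $ k) \<Longrightarrow> z + y \<in> A"
  and A_conv: "convex (UNIV - A)" and A_0: "0 \<notin> closure A"
  using R unfolding classR_def by auto

lemma zero_notin: "0 \<notin> A" using A_0 closure_subset by auto

lemma star: assumes z: "z \<in> A" and t: "1 \<le> t" shows "t *\<^sub>R z \<in> A"
proof (rule ccontr)
  assume nz: "t *\<^sub>R z \<notin> A"
  have "(1 / t) *\<^sub>R (t *\<^sub>R z) + (1 - 1 / t) *\<^sub>R 0 \<in> UNIV - A"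
    using A_conv nz zero_notin t unfolding convex_def
    by (intro A_conv[unfolded convex_def, rule_format]) auto
  then show False using z t by simp
qed

lemma dil_iff: "0 < x \<Longrightarrow> z \<in> dil x A \<longleftrightarrow> (1 / x) *\<^sub>R z \<in> A"
  unfolding dil_def
proof
  assume x: "0 < x" and "z \<in> (\<lambda>z. x *\<^sub>R z) ` A"
  then show "(1 / x) *\<^sub>R z \<in> A" by auto
next
  assume x: "0 < x" and "(1 / x) *\<^sub>R z \<in> A"
  then have "x *\<^sub>R ((1 / x) *\<^sub>R z) \<in> (\<lambda>z. x *\<^sub>R z) ` A" by blast
  then show "z \<in> (\<lambda>z. x *\<^sub>R z) ` A" using x by simp
qed

lemma away: obtains r where "0 < r" "\<And>z. z \<in> A \<Longrightarrow> r \<le> norm z"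
proof -
  from A_0 obtain e where e: "0 < e" "\<forall>y\<in>A. \<not> dist y 0 < e"
    unfolding closure_approachable by auto
  show ?thesis by (rule that[OF e(1)]) (use e(2) in \<open>force simp: dist_norm\<close>)
qed

definition U :: "real ^ 'd \<Rightarrow> real set" where "U z = {u. 0 < u \<and> z \<in> dil u A}"

lemma supA_U: "supA A z = (if U z = {} then 0 else Sup (U z))"
  unfolding supA_def U_def ..

lemma U_bdd: "bdd_above (U z)"
proof -
  obtain r where r: "0 < r" "\<And>z. z \<in> A \<Longrightarrow> r \<le> norm z" using away by blast
  show ?thesis unfolding bdd_above_def
  proof (intro exI[of _ "norm z / r"] ballI)
    fix u assume "u \<in> U z"
    then have u: "0 < u" "(1 / u) *\<^sub>R z \<in> A" unfolding U_def using dil_iff by auto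
    then have "r \<le> norm z / u" using r(2)[OF u(2)] by simp
    then show "u \<le> norm z / r" using u r by (simp add: field_simps)
  qed
qed

lemma U_down: assumes "u \<in> U z" "0 < u'" "u' \<le> u" shows "u' \<in> U z"
proof -
  have "(1 / u) *\<^sub>R z \<in> A" using assms unfolding U_def by (auto simp: dil_iff)
  then have "(u / u') *\<^sub>R ((1 / u) *\<^sub>R z) \<in> A" by (rule star) (use assms in auto)
  then show ?thesis using assms unfolding U_def by (auto simp: dil_iff)
qed

lemma U_open: assumes "u \<in> U z" obtains u' where "u' \<in> U z" "u < u'"
proof -
  define T where "T = {0<..} \<inter> (\<lambda>s. (1 / s) *\<^sub>R z) -` A"
  have "open T" unfolding T_def
    by (intro continuous_open_preimage A_open continuous_intros) auto
  moreover have "u \<in> T" using assms unfolding T_def U_def by (auto simp: dil_iff)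
  ultimately obtain e where e: "0 < e" "ball u e \<subseteq> T" by (auto simp: open_contains_ball)
  have "u + e / 2 \<in> T" using e by (intro subsetD[OF e(2)]) (auto simp: dist_real_def)
  then have "u + e / 2 \<in> U z" unfolding T_def U_def by (auto simp: dil_iff)
  then show ?thesis using e by (intro that) auto
qed

lemma supA_nonneg: "0 \<le> supA A z"
proof (cases "U z = {}")
  case False
  then obtain u where "u \<in> U z" by auto
  then have "u \<le> Sup (U z)" by (intro cSup_upper U_bdd)
  moreover have "0 < u" using \<open>u \<in> U z\<close> unfolding U_def by auto
  ultimately show ?thesis using False by (simp add: supA_U)
qed (simp add: supA_U)

lemma dil_supA: assumes x: "0 < x" shows "z \<in> dil x A \<longleftrightarrow> x < supA A z"
proof
  assume "z \<in> dil x A"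
  then have xU: "x \<in> U z" using x unfolding U_def by auto
  obtain u' where u': "u' \<in> U z" "x < u'" using U_open[OF xU] by blast
  have "u' \<le> Sup (U z)" by (intro cSup_upper u' U_bdd)
  then show "x < supA A z" using u' xU unfolding supA_U by auto
next
  assume "x < supA A z"
  then have ne: "U z \<noteq> {}" using x by (cases "U z = {}") (simp_all add: supA_U)
  have lt: "x < Sup (U z)" using \<open>x < supA A z\<close> ne by (simp add: supA_U)
  then obtain u where "u \<in> U z" "x < u" using less_cSup_iff[OF ne U_bdd] by auto
  then have "x \<in> U z" using x by (auto intro: U_down)
  then show "z \<in> dil x A" unfolding U_def by auto
qed

lemma dil_scale: "0 < x \<Longrightarrow> 0 < c \<Longrightarrow> c *\<^sub>R z \<in> dil x A \<longleftrightarrow> z \<in> dil (x / c) A"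
  by (simp add: dil_iff)

lemma eq_by_gt: fixes a b :: real
  assumes "0 \<le> a" "0 \<le> b" "\<And>x. 0 < x \<Longrightarrow> x < a \<longleftrightarrow> x < b" shows "a = b"
proof (rule ccontr)
  assume "a \<noteq> b"
  then consider "a < b" | "b < a" by linarith
  then show False
  proof cases
    case 1 then show False using assms(3)[of "(a + b) / 2"] assms(1) by auto
  next
    case 2 then show False using assms(3)[of "(a + b) / 2"] assms(2) by auto
  qed
qed

lemma supA_scale: assumes c: "0 \<le> c" shows "supA A (c *\<^sub>R z) = c * supA A z"
proof (cases "c = 0")
  case True
  have "\<not> x < supA A 0" if "0 < x" for x
    using dil_supA[OF that, of 0] zero_notin that by (simp add: dil_iff)
  then have "supA A 0 \<le> 0"
  proof -
    assume H: "\<And>x. 0 < x \<Longrightarrow> \<not> x < supA A 0"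
    show "supA A 0 \<le> 0"
    proof (rule ccontr)
      assume "\<not> supA A 0 \<le> 0"
      then show False using H[of "supA A 0 / 2"] by simp
    qed
  qed
  then show ?thesis using True supA_nonneg[of 0] by simp
next
  case False
  then have c: "0 < c" using c by simp
  show ?thesis
  proof (rule eq_by_gt)
    show "0 \<le> supA A (c *\<^sub>R z)" "0 \<le> c * supA A z" using supA_nonneg c by auto
    fix x :: real assume x: "0 < x"
    have "x < supA A (c *\<^sub>R z) \<longleftrightarrow> z \<in> dil (x / c) A"
      using dil_supA[OF x] dil_scale[OF x c] by simp
    also have "\<dots> \<longleftrightarrow> x / c < supA A z" using x c by (intro dil_supA) simp
    also have "\<dots> \<longleftrightarrow> x < c * supA A z" using c by (simp add: divide_less_eq mult.commute)
    finally show "x < supA A (c *\<^sub>R z) \<longleftrightarrow> x < c * supA A z" .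
  qed
qed

lemma supA_add: "supA A (z1 + z2) \<le> supA A z1 + supA A z2"
proof (rule ccontr)
  assume "\<not> ?thesis"
  then have lt: "supA A z1 + supA A z2 < supA A (z1 + z2)" by simp
  define d where "d = (supA A (z1 + z2) - supA A z1 - supA A z2) / 3"
  have d: "0 < d" using lt unfolding d_def by simp
  define a where "a = supA A z1 + d"
  define b where "b = supA A z2 + d"
  have a: "0 < a" and b: "0 < b" using d supA_nonneg[of z1] supA_nonneg[of z2] unfolding a_def b_def by auto
  have "z1 \<notin> dil a A" using dil_supA[OF a] d unfolding a_def by simp
  then have n1: "(1 / a) *\<^sub>R z1 \<in> UNIV - A" using dil_iff[OF a] by simp
  have "z2 \<notin> dil b A" using dil_supA[OF b] d unfolding b_def by simp
  then have n2: "(1 / b) *\<^sub>R z2 \<in> UNIV - A" using dil_iff[OF b] by simp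
  have ab: "a + b < supA A (z1 + z2)" unfolding a_def b_def d_def using lt by (simp add: field_simps)
  have "z1 + z2 \<in> dil (a + b) A" using dil_supA[of "a + b"] a b ab by simp
  then have inA: "(1 / (a + b)) *\<^sub>R (z1 + z2) \<in> A" using dil_iff[of "a + b"] a b by simp
  have "(a / (a + b)) *\<^sub>R ((1 / a) *\<^sub>R z1) + (b / (a + b)) *\<^sub>R ((1 / b) *\<^sub>R z2) \<in> UNIV - A"
    using a b n1 n2 by (intro A_conv[unfolded convex_def, rule_format]) (auto simp: add_divide_distrib[symmetric])
  moreover have "(a / (a + b)) *\<^sub>R ((1 / a) *\<^sub>R z1) + (b / (a + b)) *\<^sub>R ((1 / b) *\<^sub>R z2) = (1 / (a + b)) *\<^sub>R (z1 + z2)"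
    using a b by (simp add: scaleR_add_right)
  ultimately show False using inA by simp
qed

lemma supA_sum: "finite I \<Longrightarrow> (\<And>l. l \<in> I \<Longrightarrow> 0 \<le> c l) \<Longrightarrow>
    supA A (\<Sum>l\<in>I. c l *\<^sub>R z l) \<le> (\<Sum>l\<in>I. c l * supA A (z l))"
proof (induction I rule: finite_induct)
  case empty
  then show ?case using supA_scale[of 0 0] by simp
next
  case (insert k I)
  have "supA A (\<Sum>l\<in>insert k I. c l *\<^sub>R z l) = supA A (c k *\<^sub>R z k + (\<Sum>l\<in>I. c l *\<^sub>R z l))"
    using insert by simp
  also have "\<dots> \<le> supA A (c k *\<^sub>R z k) + supA A (\<Sum>l\<in>I. c l *\<^sub>R z l)" by (rule supA_add)
  also have "\<dots> \<le> c k * supA A (z k) + (\<Sum>l\<in>I. c l * supA A (z l))"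
    using insert by (simp add: supA_scale)
  finally show ?case using insert by simp
qed

lemma dil_open: "0 < x \<Longrightarrow> open (dil x A)"
  unfolding dil_def by (intro open_scaling A_open) simp

lemma supA_meas[measurable]: "supA A \<in> borel_measurable borel"
proof (rule borel_measurable_iff_greater[THEN iffD2], intro allI)
  fix a :: real
  have "{w \<in> space borel. a < supA A w} \<in> sets borel" if "0 < a"
  proof -
    have "{w \<in> space borel. a < supA A w} = dil a A" using dil_supA[OF that] by auto
    then show ?thesis using dil_open[OF that] by simp
  qed
  moreover have "{w \<in> space borel. a < supA A w} \<in> sets borel" if "a < 0"
  proof -
    have "{w \<in> space borel. a < supA A w} = UNIV" using that supA_nonneg by (auto intro: less_le_trans)
    then show ?thesis by simp
  qed
  moreover have "{w \<in> space borel. 0 < supA A w} \<in> sets borel"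
  proof -
    have "{w \<in> space borel. 0 < supA A w} = (\<Union>x\<in>{0<..}. dil x A)"
    proof safe
      fix w assume "w \<in> space borel" "0 < supA A w"
      then have "0 < supA A w / 2" "supA A w / 2 < supA A w" by auto
      then show "w \<in> (\<Union>x\<in>{0<..}. dil x A)" using dil_supA by blast
    next
      fix w x assume "0 < x" "w \<in> dil x A"
      then show "0 < supA A w" using dil_supA by force
    qed simp
    then show ?thesis using dil_open by (auto intro!: borel_open)
  qed
  ultimately show "{w \<in> space borel. a < supA A w} \<in> sets borel"
    by (cases a "0::real" rule: linorder_cases) auto
qed

lemma dil_inc: "0 < x \<Longrightarrow> z \<in> dil x A \<Longrightarrow> (\<forall>k. 0 \<le> y $ k) \<Longrightarrow> z + y \<in> dil x A"
proof -
  assume x: "0 < x" and z: "z \<in> dil x A" and y: "\<forall>k. 0 \<le> y $ k"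
  have "(1 / x) *\<^sub>R z + (1 / x) *\<^sub>R y \<in> A"
    using z x y by (intro A_inc) (auto simp: dil_iff)
  then show ?thesis using x by (simp add: dil_iff scaleR_add_right)
qed

end


lemma (in prob_space) bonf:
  assumes I: "finite I" and E: "\<And>i. i \<in> I \<Longrightarrow> E i \<in> events"
  shows "(\<Sum>i\<in>I. (prob (E i) - (\<Sum>k\<in>I - {i}. prob (E i \<inter> E k)))) \<le> prob (\<Union>i\<in>I. E i)"
proof -
  define F where "F i = E i - (\<Union>k\<in>I - {i}. E k)" for i
  have Fs: "F i \<in> events" if "i \<in> I" for i
    unfolding F_def using that I E by (intro sets.Diff sets.finite_UN) auto
  have disj: "disjoint_family_on F I" unfolding disjoint_family_on_def F_def by auto
  have "(\<Sum>i\<in>I. prob (F i)) = prob (\<Union>i\<in>I. F i)"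
    using I Fs disj by (intro finite_measure_finite_Union[symmetric]) auto
  also have "\<dots> \<le> prob (\<Union>i\<in>I. E i)"
    using I E by (intro finite_measure_mono sets.finite_UN) (auto simp: F_def)
  finally have 1: "(\<Sum>i\<in>I. prob (F i)) \<le> prob (\<Union>i\<in>I. E i)" .
  have "prob (E i) - (\<Sum>k\<in>I - {i}. prob (E i \<inter> E k)) \<le> prob (F i)" if i: "i \<in> I" for i
  proof -
    have "prob (E i) \<le> prob (F i \<union> (\<Union>k\<in>I - {i}. E i \<inter> E k))"
      using I E i Fs by (intro finite_measure_mono sets.Un sets.finite_UN) (auto simp: F_def)
    also have "\<dots> \<le> prob (F i) + prob (\<Union>k\<in>I - {i}. E i \<inter> E k)"
      using I E i Fs by (intro measure_subadditive sets.finite_UN) (auto simp: emeasure_eq_measure)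
    also have "prob (\<Union>k\<in>I - {i}. E i \<inter> E k) \<le> (\<Sum>k\<in>I - {i}. prob (E i \<inter> E k))"
      using I E i by (intro finite_measure_subadditive_finite) auto
    finally show ?thesis by simp
  qed
  then have "(\<Sum>i\<in>I. (prob (E i) - (\<Sum>k\<in>I - {i}. prob (E i \<inter> E k)))) \<le> (\<Sum>i\<in>I. prob (F i))"
    by (intro sum_mono)
  with 1 show ?thesis by simp
qed


locale mainloc = prob_space M + geo A for M :: "'w measure" and A :: "(real ^ 'd) set" +
  fixes Z :: "nat \<Rightarrow> 'w \<Rightarrow> real ^ 'd" and V :: "nat \<Rightarrow> (real ^ 'd) measure" and n m :: nat and b :: real
  assumes n: "1 \<le> n"
    and indep: "indep_vars (\<lambda>_. borel) Z {1..n+m}"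
    and nonneg: "\<And>i \<omega> k. i \<in> {1..n+m} \<Longrightarrow> \<omega> \<in> space M \<Longrightarrow> 0 \<le> Z i \<omega> $ k"
    and distr: "\<And>i. i \<in> {1..n+m} \<Longrightarrow> distr M borel (Z i) = V i"
    and inA: "\<And>i. i \<in> {1..n} \<Longrightarrow> classAA A (V i)"
    and equiv: "\<And>i. i \<in> {2..n} \<Longrightarrow>
        (\<lambda>x. measure (V i) (dil x A)) \<in> O(\<lambda>x. measure (V 1) (dil x A)) \<and>
        (\<lambda>x. measure (V 1) (dil x A)) \<in> O(\<lambda>x. measure (V i) (dil x A))"
    and small: "\<And>j. j \<in> {n+1..n+m} \<Longrightarrow>
        (\<lambda>x. measure (V j) (dil x A)) \<in> o(\<lambda>x. measure (V 1) (dil x A))"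
    and b: "0 < b"
begin

definition X :: "nat \<Rightarrow> 'w \<Rightarrow> real" where "X l \<omega> = supA A (Z l \<omega>)"

abbreviation "Gt l \<equiv> tail (distr M borel (X l))"

lemma Zm[measurable]: "l \<in> {1..n+m} \<Longrightarrow> Z l \<in> borel_measurable M"
  using indep unfolding indep_vars_def by auto

lemma Xm[measurable]: "l \<in> {1..n+m} \<Longrightarrow> X l \<in> borel_measurable M"
  unfolding X_def by (rule measurable_compose[OF Zm supA_meas])

lemma Xind: "indep_vars (\<lambda>_. borel) X {1..n+m}"
  unfolding X_def by (rule indep_vars_compose2[OF indep]) simp

lemma Xnonneg: "0 \<le> X l \<omega>" unfolding X_def by (rule supA_nonneg)

lemma distrX: "l \<in> {1..n+m} \<Longrightarrow> distr M borel (X l) = distA A (V l)"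
  unfolding distA_def X_def by (subst distr[symmetric]) (auto simp: distr_distr comp_def)

lemma Gt_nonneg: "0 \<le> Gt l t" unfolding tail_def by simp

lemma probZ: assumes l: "l \<in> {1..n+m}" and c: "0 < c" and x: "0 < x"
  shows "prob {\<omega> \<in> space M. c *\<^sub>R Z l \<omega> \<in> dil x A} = Gt l (x / c)"
proof -
  have "{\<omega> \<in> space M. c *\<^sub>R Z l \<omega> \<in> dil x A} = X l -` {x / c<..} \<inter> space M"
    using dil_scale[OF x c] dil_supA[of "x / c"] x c by (auto simp: X_def)
  then show ?thesis unfolding tail_def using l by (subst measure_distr) auto
qed

lemma Gdil: assumes l: "l \<in> {1..n+m}" and t: "0 < t"
  shows "Gt l t = measure (V l) (dil t A)"
proof -
  have "Gt l t = prob {\<omega> \<in> space M. 1 *\<^sub>R Z l \<omega> \<in> dil t A}" using probZ[OF l _ t, of 1] by simp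
  also have "\<dots> = measure (distr M borel (Z l)) (dil t A)"
    using l dil_open[OF t] by (subst measure_distr) (auto intro!: arg_cong[where f=prob])
  finally show ?thesis using distr[OF l] by simp
qed

lemma heavyX: "l \<in> {1..n} \<Longrightarrow> tailB (distr M borel (X l))"
  using inA[of l] distrX[of l] unfolding classAA_def classA_def tailB_def by auto

lemma ev_Gdil: "l \<in> {1..n+m} \<Longrightarrow> eventually (\<lambda>t. Gt l t = measure (V l) (dil t A)) at_top"
  by (rule eventually_mono[OF eventually_gt_at_top[of 0]]) (rule Gdil)

lemma upper_each: assumes l: "l \<in> {1..n+m}" shows "\<exists>c>0. eventually (\<lambda>t. Gt l t \<le> c * Gt 1 t) at_top"
proof -
  have o1: "1 \<in> {1..n+m}" using n by auto
  consider "l = 1" | "l \<in> {2..n}" | "l \<in> {n+1..n+m}" using l by force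
  then show ?thesis
  proof cases
    case 1 then show ?thesis by (intro exI[of _ 1]) auto
  next
    case 2
    obtain c where c: "0 < c" "eventually (\<lambda>x. norm (measure (V l) (dil x A)) \<le> c * norm (measure (V 1) (dil x A))) at_top"
      using equiv[OF 2] by (elim conjE landau_o.bigE) auto
    show ?thesis
    proof (intro exI[of _ c] conjI c(1))
      show "eventually (\<lambda>t. Gt l t \<le> c * Gt 1 t) at_top"
        using c(2) ev_Gdil[OF l] ev_Gdil[OF o1] by eventually_elim simp
    qed
  next
    case 3
    have c: "eventually (\<lambda>x. norm (measure (V l) (dil x A)) \<le> 1 * norm (measure (V 1) (dil x A))) at_top"
      using small[OF 3] by (rule landau_o.smallD) simp
    show ?thesis
    proof (intro exI[of _ 1] conjI)
      show "eventually (\<lambda>t. Gt l t \<le> 1 * Gt 1 t) at_top"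
        using c ev_Gdil[OF l] ev_Gdil[OF o1] by eventually_elim simp
    qed simp
  qed
qed

lemma lower_each: assumes l: "l \<in> {1..n}" shows "\<exists>c>0. eventually (\<lambda>t. Gt 1 t \<le> c * Gt l t) at_top"
proof -
  have o1: "1 \<in> {1..n+m}" using n by auto
  have l': "l \<in> {1..n+m}" using l by auto
  consider "l = 1" | "l \<in> {2..n}" using l by force
  then show ?thesis
  proof cases
    case 1 then show ?thesis by (intro exI[of _ 1]) auto
  next
    case 2
    obtain c where c: "0 < c" "eventually (\<lambda>x. norm (measure (V 1) (dil x A)) \<le> c * norm (measure (V l) (dil x A))) at_top"
      using equiv[OF 2] by (elim conjE landau_o.bigE) auto
    show ?thesis
    proof (intro exI[of _ c] conjI c(1))
      show "eventually (\<lambda>t. Gt 1 t \<le> c * Gt l t) at_top"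
        using c(2) ev_Gdil[OF l'] ev_Gdil[OF o1] by eventually_elim simp
    qed
  qed
qed

lemma unif_const:
  fixes F H :: "nat \<Rightarrow> real \<Rightarrow> real"
  assumes fin: "finite L" and ex: "\<And>l. l \<in> L \<Longrightarrow> \<exists>c>0. eventually (\<lambda>t. F l t \<le> c * H l t) at_top"
    and Hnn: "\<And>l t. 0 \<le> H l t"
  obtains K x0 where "1 \<le> K" "0 \<le> x0" "\<And>l t. l \<in> L \<Longrightarrow> x0 \<le> t \<Longrightarrow> F l t \<le> K * H l t"
proof -
  from ex have "\<forall>l\<in>L. \<exists>c. 0 < c \<and> eventually (\<lambda>t. F l t \<le> c * H l t) at_top" by blast
  then obtain f where f: "\<And>l. l \<in> L \<Longrightarrow> 0 < f l \<and> eventually (\<lambda>t. F l t \<le> f l * H l t) at_top"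
    by metis
  define K where "K = 1 + (\<Sum>l\<in>L. f l)"
  have fK: "f l \<le> K" if "l \<in> L" for l
  proof -
    have "f l \<le> (\<Sum>l\<in>L. f l)" using fin that f by (intro member_le_sum) (auto simp: less_imp_le)
    then show ?thesis unfolding K_def by simp
  qed
  have K1: "1 \<le> K" unfolding K_def using f by (simp add: sum_nonneg less_imp_le)
  have "eventually (\<lambda>t. \<forall>l\<in>L. F l t \<le> f l * H l t) at_top"
    using fin f by (intro eventually_ball_finite) auto
  then obtain x1 where x1: "\<And>t l. x1 \<le> t \<Longrightarrow> l \<in> L \<Longrightarrow> F l t \<le> f l * H l t"
    unfolding eventually_at_top_linorder by auto
  show ?thesis
  proof (rule that[OF K1, of "max x1 0"])
    fix l t assume l: "l \<in> L" and t: "max x1 0 \<le> t"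
    have "F l t \<le> f l * H l t" using x1[OF _ l] t by auto
    also have "\<dots> \<le> K * H l t" using fK[OF l] Hnn by (intro mult_right_mono) auto
    finally show "F l t \<le> K * H l t" .
  qed simp
qed

lemma lightX: "l \<in> {n+1..n+m} \<Longrightarrow> 0 < \<delta> \<Longrightarrow> eventually (\<lambda>t. Gt l t \<le> \<delta> * Gt 1 t) at_top"
proof -
  assume l: "l \<in> {n+1..n+m}" and d: "0 < \<delta>"
  have o1: "1 \<in> {1..n+m}" using n by auto
  have l': "l \<in> {1..n+m}" using l n by auto
  have c: "eventually (\<lambda>x. norm (measure (V l) (dil x A)) \<le> \<delta> * norm (measure (V 1) (dil x A))) at_top"
    using small[OF l] d by (rule landau_o.smallD)
  show ?thesis using c ev_Gdil[OF l'] ev_Gdil[OF o1] by eventually_elim simp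
qed


definition Cset :: "(nat \<Rightarrow> real) set" where
  "Cset = {c :: nat \<Rightarrow> real.
              (\<forall>i\<in>{1..n}. 0 < c i \<and> c i \<le> b) \<and>
              (\<forall>j\<in>{n+1..n+m}. 0 \<le> c j \<and> c j \<le> b \<and> (\<exists>i\<in>{1..n}. c j \<le> c i))}"

definition Num :: "(nat \<Rightarrow> real) \<Rightarrow> real \<Rightarrow> real" where
  "Num c x = measure M {\<omega> \<in> space M. (\<Sum>i=1..n+m. c i *\<^sub>R Z i \<omega>) \<in> dil x A}"

definition Den :: "(nat \<Rightarrow> real) \<Rightarrow> real \<Rightarrow> real" where
  "Den c x = (\<Sum>i=1..n. measure M {\<omega> \<in> space M. c i *\<^sub>R Z i \<omega> \<in> dil x A})"

lemma Cset_nonneg: "c \<in> Cset \<Longrightarrow> l \<in> {1..n+m} \<Longrightarrow> 0 \<le> c l"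
  unfolding Cset_def by (cases "l \<le> n") (auto simp: less_imp_le)

lemma Num_set[measurable]: "{\<omega> \<in> space M. (\<Sum>i=1..n+m. c i *\<^sub>R Z i \<omega>) \<in> dil x A} \<in> events" if "0 < x"
proof -
  have [measurable]: "dil x A \<in> sets borel" using dil_open[OF that] by simp
  show ?thesis by measurable
qed

lemma num_upper: assumes c: "c \<in> Cset" and x: "0 < x"
  shows "Num c x \<le> prob {\<omega> \<in> space M. x < (\<Sum>l\<in>{1..n+m}. c l * X l \<omega>)}"
  unfolding Num_def
proof (rule finite_measure_mono)
  show "{\<omega> \<in> space M. x < (\<Sum>l\<in>{1..n+m}. c l * X l \<omega>)} \<in> events" by measurable
  show "{\<omega> \<in> space M. (\<Sum>i = 1..n + m. c i *\<^sub>R Z i \<omega>) \<in> dil x A} \<subseteq> {\<omega> \<in> space M. x < (\<Sum>l\<in>{1..n+m}. c l * X l \<omega>)}"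
  proof safe
    fix \<omega> assume "\<omega> \<in> space M" "(\<Sum>i = 1..n + m. c i *\<^sub>R Z i \<omega>) \<in> dil x A"
    then have "x < supA A (\<Sum>i = 1..n + m. c i *\<^sub>R Z i \<omega>)" using dil_supA[OF x] by simp
    also have "\<dots> \<le> (\<Sum>l\<in>{1..n+m}. c l * supA A (Z l \<omega>))"
      using Cset_nonneg[OF c] by (intro supA_sum) auto
    finally show "x < (\<Sum>l\<in>{1..n+m}. c l * X l \<omega>)" unfolding X_def .
  qed
qed

lemma den_eq: assumes c: "c \<in> Cset" and x: "0 < x"
  shows "Den c x = (\<Sum>i\<in>{1..n}. Gt i (x / c i))"
  unfolding Den_def using c x by (intro sum.cong refl probZ) (auto simp: Cset_def)

lemma E_prob: "i \<in> {1..n+m} \<Longrightarrow> prob (X i -` {t<..} \<inter> space M) = Gt i t"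
  unfolding tail_def by (subst measure_distr) auto

lemma num_lower: assumes c: "c \<in> Cset" and x: "0 < x"
  shows "(\<Sum>i\<in>{1..n}. (Gt i (x / c i) - (\<Sum>k\<in>{1..n} - {i}. Gt i (x / c i) * Gt k (x / c k)))) \<le> Num c x"
proof -
  define E where "E i = X i -` {x / c i<..} \<inter> space M" for i
  have Es: "E i \<in> events" if "i \<in> {1..n}" for i using that unfolding E_def by (auto intro!: measurable_sets)
  have pE: "prob (E i) = Gt i (x / c i)" if "i \<in> {1..n}" for i using that unfolding E_def by (intro E_prob) auto
  have pEE: "prob (E i \<inter> E k) = Gt i (x / c i) * Gt k (x / c k)" if "i \<in> {1..n}" "k \<in> {1..n}" "i \<noteq> k" for i k
  proof -
    have "prob (\<Inter>j\<in>{i,k}. X j -` {x / c j<..} \<inter> space M) = (\<Prod>j\<in>{i,k}. prob (X j -` {x / c j<..} \<inter> space M))"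
      using that by (intro indep_varsD[OF Xind]) auto
    then show ?thesis using that pE by (simp add: E_def Int_assoc)
  qed
  have "(\<Sum>i\<in>{1..n}. (Gt i (x / c i) - (\<Sum>k\<in>{1..n} - {i}. Gt i (x / c i) * Gt k (x / c k))))
      = (\<Sum>i\<in>{1..n}. (prob (E i) - (\<Sum>k\<in>{1..n} - {i}. prob (E i \<inter> E k))))"
    by (intro sum.cong refl) (simp add: pE pEE)
  also have "\<dots> \<le> prob (\<Union>i\<in>{1..n}. E i)" by (intro bonf Es) auto
  also have "\<dots> \<le> Num c x"
    unfolding Num_def
  proof (rule finite_measure_mono)
    show "{\<omega> \<in> space M. (\<Sum>i = 1..n + m. c i *\<^sub>R Z i \<omega>) \<in> dil x A} \<in> events" using x by (rule Num_set)
    show "(\<Union>i\<in>{1..n}. E i) \<subseteq> {\<omega> \<in> space M. (\<Sum>i = 1..n + m. c i *\<^sub>R Z i \<omega>) \<in> dil x A}"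
    proof safe
      fix i \<omega> assume i: "i \<in> {1..n}" and w: "\<omega> \<in> E i"
      have ci: "0 < c i" using c i unfolding Cset_def by auto
      have wM: "\<omega> \<in> space M" using w unfolding E_def by auto
      have "x / c i < supA A (Z i \<omega>)" using w unfolding E_def X_def by auto
      then have "Z i \<omega> \<in> dil (x / c i) A" using dil_supA[of "x / c i"] x ci by simp
      then have ciZ: "c i *\<^sub>R Z i \<omega> \<in> dil x A" using dil_scale[OF x ci] by simp
      have iN: "i \<in> {1..n+m}" using i by auto
      have sumeq: "(\<Sum>l = 1..n + m. c l *\<^sub>R Z l \<omega>) = c i *\<^sub>R Z i \<omega> + (\<Sum>l\<in>{1..n+m} - {i}. c l *\<^sub>R Z l \<omega>)"
        using iN by (subst sum.remove[of _ i]) auto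
      have "\<forall>k. 0 \<le> (\<Sum>l\<in>{1..n+m} - {i}. c l *\<^sub>R Z l \<omega>) $ k"
        using Cset_nonneg[OF c] nonneg[OF _ wM] by (auto simp: sum_component intro!: sum_nonneg)
      then show "(\<Sum>l = 1..n + m. c l *\<^sub>R Z l \<omega>) \<in> dil x A"
        unfolding sumeq by (intro dil_inc[OF x ciZ])
      show "\<omega> \<in> space M" by (rule wM)
    qed
  qed
  finally show ?thesis .
qed


end


context mainloc begin

lemma key:
  obtains K' where "0 \<le> K'" "\<And>\<epsilon>. 0 < \<epsilon> \<Longrightarrow> \<epsilon> \<le> 1 \<Longrightarrow>
    eventually (\<lambda>x. \<forall>c\<in>Cset. \<bar>Num c x / Den c x - 1\<bar> \<le> \<epsilon> * (1 + K')) at_top"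
proof -
  obtain K x0 where K: "1 \<le> K" "0 \<le> x0" and upK: "\<And>l t. l \<in> {1..n+m} \<Longrightarrow> x0 \<le> t \<Longrightarrow> Gt l t \<le> K * Gt 1 t"
    using unif_const[of "{1..n+m}" "\<lambda>l t. Gt l t" "\<lambda>l t. Gt 1 t", OF finite_atLeastAtMost upper_each Gt_nonneg] by blast
  obtain K' x1 where K': "1 \<le> K'" "0 \<le> x1" and loK: "\<And>l t. l \<in> {1..n} \<Longrightarrow> x1 \<le> t \<Longrightarrow> Gt 1 t \<le> K' * Gt l t"
    using unif_const[of "{1..n}" "\<lambda>l t. Gt 1 t" "\<lambda>l t. Gt l t", OF finite_atLeastAtMost lower_each Gt_nonneg] by blast
  interpret O: oned M X "n+m" n K x0
    apply unfold_locales
    apply (rule Xind)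
    apply (rule Xnonneg)
    apply (use heavyX[unfolded tailB_def] in blast)
    apply (use heavyX[unfolded tailB_def] in blast)
    apply (rule n)
    apply simp
    apply (rule K(1))
    apply (rule K(2))
    apply (blast intro: upK)
    apply (blast intro: lightX)
    done
  show ?thesis
  proof (rule that[of K'])
    show "0 \<le> K'" using K' by simp
    fix \<epsilon> :: real assume e: "0 < \<epsilon>" "\<epsilon> \<le> 1"
    obtain y0 where y0: "\<And>y w. y0 \<le> y \<Longrightarrow> O.adm {1..n+m} w \<Longrightarrow>
        prob {\<omega> \<in> space M. y < O.S {1..n+m} w \<omega>} \<le> (1 + \<epsilon>) * O.Hs {1..n+m} w y + \<epsilon> * Gt 1 y"
      using O.claim_all[of "{1..n+m}" \<epsilon>] e unfolding O.claim_def eventually_at_top_linorder by auto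
    have divlim: "filterlim (\<lambda>x. x / b) at_top at_top"
      unfolding filterlim_at_top
    proof (intro allI)
      fix z :: real show "eventually (\<lambda>x. z \<le> x / b) at_top"
        using eventually_ge_at_top[of "z * b"] by eventually_elim (use b in \<open>simp add: le_divide_eq\<close>)
    qed
    have Qlim: "((\<lambda>x. \<Sum>k\<in>{1..n}. Gt k (x / b)) \<longlongrightarrow> 0) at_top"
    proof (intro tendsto_null_sum)
      fix k assume k: "k \<in> {1..n}"
      show "((\<lambda>x. Gt k (x / b)) \<longlongrightarrow> 0) at_top"
        using filterlim_compose[OF tailB.tail_to0[OF heavyX[OF k]] divlim] by (simp add: comp_def)
    qed
    have evQ: "eventually (\<lambda>x. (\<Sum>k\<in>{1..n}. Gt k (x / b)) < \<epsilon>) at_top"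
      using order_tendstoD(2)[OF Qlim e(1)] .
    have evx: "eventually (\<lambda>x. b * (max y0 x1 + 1) \<le> x) at_top" by (rule eventually_ge_at_top)
    show "eventually (\<lambda>x. \<forall>c\<in>Cset. \<bar>Num c x / Den c x - 1\<bar> \<le> \<epsilon> * (1 + K')) at_top"
      using evQ evx
    proof eventually_elim
      case (elim x)
      define Q where "Q = (\<Sum>k\<in>{1..n}. Gt k (x / b))"
      have Q: "Q < \<epsilon>" using elim(1) unfolding Q_def .
      have xb: "max y0 x1 + 1 \<le> x / b" using elim(2) b by (simp add: le_divide_eq mult.commute)
      have "0 < x / b" using xb K'(2) max.cobounded2[of x1 y0] by linarith
      then have x: "0 < x" using b by (simp add: zero_less_divide_iff)
      show ?case
      proof
        fix c assume c: "c \<in> Cset"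
        define Mc where "Mc = Max (c ` {1..n})"
        have fin: "finite (c ` {1..n})" "c ` {1..n} \<noteq> {}" using n by auto
        obtain i0 where i0: "i0 \<in> {1..n}" "c i0 = Mc" using Max_in[OF fin] unfolding Mc_def by auto
        have cle: "c l \<le> Mc" if "l \<in> {1..n}" for l unfolding Mc_def using fin that by (intro Max_ge) auto
        have cpos: "0 < c l" "c l \<le> b" if "l \<in> {1..n}" for l using c that unfolding Cset_def by auto
        have Mc: "0 < Mc" "Mc \<le> b" using cpos[OF i0(1)] i0(2) by auto
        have clt: "c l \<le> Mc" if lL: "l \<in> {n+1..n+m}" for l
        proof -
          have "\<exists>i\<in>{1..n}. c l \<le> c i" using c lL unfolding Cset_def by blast
          then obtain i where "i \<in> {1..n}" "c l \<le> c i" by blast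
          then show ?thesis using cle by force
        qed
        define w where "w l = c l / Mc" for l
        have adm: "O.adm {1..n+m} w"
          unfolding O.adm_def w_def
        proof
          fix l assume l: "l \<in> {1..n+m}"
          show "0 \<le> c l / Mc \<and> c l / Mc \<le> 1 \<and> (l \<le> n \<longrightarrow> 0 < c l / Mc)"
          proof (cases "l \<le> n")
            case True
            then have "l \<in> {1..n}" using l by auto
            then have "0 < c l" "c l \<le> Mc" using cpos cle by auto
            then show ?thesis using Mc True by auto
          next
            case False
            then have "l \<in> {n+1..n+m}" using l by auto
            then show ?thesis using clt Mc Cset_nonneg[OF c l] False by auto
          qed
        qed
        define y where "y = x / Mc"
        have xby: "x / b \<le> y" unfolding y_def using x Mc by (intro divide_left_mono) auto
        have yy: "y0 \<le> y" "x1 \<le> y" using xby xb by auto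
        have Den: "Den c x = (\<Sum>i\<in>{1..n}. Gt i (x / c i))" by (rule den_eq[OF c x])
        have Hs: "O.Hs {1..n+m} w y = Den c x"
        proof -
          have "{1..n+m} \<inter> {1..n} = {1..n}" by auto
          then show ?thesis unfolding O.Hs_def Den w_def y_def
            using Mc by (intro sum.cong) (auto simp: field_simps)
        qed
        have Sx: "{\<omega> \<in> space M. x < (\<Sum>l\<in>{1..n+m}. c l * X l \<omega>)} = {\<omega> \<in> space M. y < O.S {1..n+m} w \<omega>}"
        proof -
          have "x < (\<Sum>l\<in>{1..n+m}. c l * X l \<omega>) \<longleftrightarrow> y < O.S {1..n+m} w \<omega>" for \<omega>
            unfolding O.S_def w_def y_def using Mc
            by (simp add: sum_divide_distrib[symmetric] divide_less_cancel)
          then show ?thesis by auto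
        qed
        have p0: "0 < Gt i0 (x / c i0)" using tailB.pos[OF heavyX[OF i0(1)]] .
        have pi0: "Gt i0 (x / c i0) \<le> Den c x"
          unfolding Den using i0 Gt_nonneg by (intro member_le_sum) auto
        have D0: "0 < Den c x" using p0 pi0 by simp
        have u1: "Num c x \<le> (1 + \<epsilon>) * Den c x + \<epsilon> * Gt 1 y"
          using num_upper[OF c x] y0[OF yy(1) adm] Sx Hs by simp
        have "Gt 1 y \<le> K' * Gt i0 y" by (rule loK[OF i0(1) yy(2)])
        also have "Gt i0 y = Gt i0 (x / c i0)" unfolding y_def i0(2) ..
        also have "K' * Gt i0 (x / c i0) \<le> K' * Den c x" using pi0 K' by (intro mult_left_mono) auto
        finally have "\<epsilon> * Gt 1 y \<le> \<epsilon> * (K' * Den c x)" using e by (intro mult_left_mono) auto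
        then have up: "Num c x \<le> (1 + \<epsilon>) * Den c x + \<epsilon> * (K' * Den c x)"
          using u1 by linarith
        have "(\<Sum>i\<in>{1..n}. Gt i (x / c i) * (1 - Q)) \<le> (\<Sum>i\<in>{1..n}. (Gt i (x / c i) - (\<Sum>k\<in>{1..n} - {i}. Gt i (x / c i) * Gt k (x / c k))))"
        proof (rule sum_mono)
          fix i assume i: "i \<in> {1..n}"
          have "(\<Sum>k\<in>{1..n} - {i}. Gt k (x / c k)) \<le> (\<Sum>k\<in>{1..n} - {i}. Gt k (x / b))"
          proof (rule sum_mono)
            fix k assume "k \<in> {1..n} - {i}"
            then have k: "k \<in> {1..n}" by auto
            have "x / b \<le> x / c k" using x cpos[OF k] by (intro divide_left_mono) auto
            then show "Gt k (x / c k) \<le> Gt k (x / b)" by (rule tailB.tail_mono[OF heavyX[OF k]])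
          qed
          also have "\<dots> \<le> Q" unfolding Q_def by (intro sum_mono2) (auto simp: Gt_nonneg)
          finally have "Gt i (x / c i) * (\<Sum>k\<in>{1..n} - {i}. Gt k (x / c k)) \<le> Gt i (x / c i) * Q"
            by (intro mult_left_mono Gt_nonneg)
          then show "Gt i (x / c i) * (1 - Q) \<le> Gt i (x / c i) - (\<Sum>k\<in>{1..n} - {i}. Gt i (x / c i) * Gt k (x / c k))"
            by (simp add: sum_distrib_left algebra_simps)
        qed
        also have "\<dots> \<le> Num c x" by (rule num_lower[OF c x])
        finally have lo: "Den c x * (1 - Q) \<le> Num c x" unfolding Den by (simp add: sum_distrib_right)
        have "Num c x / Den c x - 1 \<le> \<epsilon> * (1 + K')"
          using up D0 by (simp add: divide_le_eq algebra_simps)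
        moreover have "1 - Num c x / Den c x \<le> \<epsilon> * (1 + K')"
        proof -
          have "Den c x - Num c x \<le> Den c x * Q" using lo by (simp add: algebra_simps)
          also have "\<dots> \<le> Den c x * (\<epsilon> * (1 + K'))" using D0 Q K' e
            by (intro mult_left_mono) (auto simp: algebra_simps intro: order_trans[of _ \<epsilon>] less_imp_le)
          finally have ineq: "Den c x - Num c x \<le> \<epsilon> * (1 + K') * Den c x" by (simp add: mult.commute)
          have "(Den c x - Num c x) / Den c x \<le> \<epsilon> * (1 + K')"
            using ineq D0 by (simp add: divide_le_eq)
          moreover have "(Den c x - Num c x) / Den c x = 1 - Num c x / Den c x"
            using D0 by (simp add: diff_divide_distrib)
          ultimately show ?thesis by simp
        qed
        ultimately show "\<bar>Num c x / Den c x - 1\<bar> \<le> \<epsilon> * (1 + K')" by linarith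
      qed
    qed
  qed
qed


end

theorem lemma4p6:
  fixes A :: "(real ^ 'd) set"
    and M :: "'w measure"
    and Z :: "nat \<Rightarrow> 'w \<Rightarrow> real ^ 'd"
    and V :: "nat \<Rightarrow> (real ^ 'd) measure"
    and n m :: nat and b :: real
  assumes A: "classR A"
    and P: "prob_space M"
    and n: "1 \<le> n"
    and indep: "prob_space.indep_vars M (\<lambda>_. borel) Z {1..n+m}"
    and nonneg: "\<And>i \<omega> k. i \<in> {1..n+m} \<Longrightarrow> \<omega> \<in> space M \<Longrightarrow> 0 \<le> Z i \<omega> $ k"
    and distr: "\<And>i. i \<in> {1..n+m} \<Longrightarrow> distr M borel (Z i) = V i"
    and inA: "\<And>i. i \<in> {1..n} \<Longrightarrow> classAA A (V i)"
    and equiv: "\<And>i. i \<in> {2..n} \<Longrightarrow>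
        (\<lambda>x. measure (V i) (dil x A)) \<in> O(\<lambda>x. measure (V 1) (dil x A)) \<and>
        (\<lambda>x. measure (V 1) (dil x A)) \<in> O(\<lambda>x. measure (V i) (dil x A))"
    and small: "\<And>j. j \<in> {n+1..n+m} \<Longrightarrow>
        (\<lambda>x. measure (V j) (dil x A)) \<in> o(\<lambda>x. measure (V 1) (dil x A))"
    and b: "0 < b"
  shows "((\<lambda>x. SUP c \<in> {c :: nat \<Rightarrow> real.
              (\<forall>i\<in>{1..n}. 0 < c i \<and> c i \<le> b) \<and>
              (\<forall>j\<in>{n+1..n+m}. 0 \<le> c j \<and> c j \<le> b \<and> (\<exists>i\<in>{1..n}. c j \<le> c i))}.
            ereal \<bar>measure M {\<omega> \<in> space M. (\<Sum>i=1..n+m. c i *\<^sub>R Z i \<omega>) \<in> dil x A}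
                   / (\<Sum>i=1..n. measure M {\<omega> \<in> space M. c i *\<^sub>R Z i \<omega> \<in> dil x A}) - 1\<bar>)
          \<longlongrightarrow> 0) at_top"
proof -
  interpret L: mainloc M A Z V n m b
    apply (rule mainloc.intro[OF P geo.intro[OF A] mainloc_axioms.intro])
    apply (rule n)
    apply (rule indep)
    apply (erule nonneg, assumption)
    apply (erule distr)
    apply (erule inA)
    apply (erule equiv)
    apply (erule small)
    apply (rule b)
    done
  obtain K' where K': "0 \<le> K'" and ev: "\<And>\<epsilon>. 0 < \<epsilon> \<Longrightarrow> \<epsilon> \<le> 1 \<Longrightarrow>
    eventually (\<lambda>x. \<forall>c\<in>L.Cset. \<bar>L.Num c x / L.Den c x - 1\<bar> \<le> \<epsilon> * (1 + K')) at_top"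
    using L.key by blast
  define F where "F x = (SUP c\<in>L.Cset. ereal \<bar>L.Num c x / L.Den c x - 1\<bar>)" for x
  have bC: "(\<lambda>_. b) \<in> L.Cset" unfolding L.Cset_def using b n by auto
  have F0: "0 \<le> F x" for x
    unfolding F_def by (rule SUP_upper2[OF bC]) simp
  have "(F \<longlongrightarrow> 0) at_top"
  proof (rule order_tendstoI)
    fix a :: ereal assume "a < 0"
    then show "eventually (\<lambda>x. a < F x) at_top" using F0 by (intro always_eventually) (auto intro: less_le_trans)
  next
    fix a :: ereal assume a: "0 < a"
    obtain r where r: "0 < ereal r" "ereal r < a" using ereal_dense2[OF a] by auto
    have r0: "0 < r" using r(1) by simp
    define \<epsilon> where "\<epsilon> = min 1 (r / (1 + K'))"
    have e: "0 < \<epsilon>" "\<epsilon> \<le> 1" unfolding \<epsilon>_def using r0 K' by auto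
    have er: "\<epsilon> * (1 + K') \<le> r"
    proof -
      have "\<epsilon> \<le> r / (1 + K')" unfolding \<epsilon>_def by simp
      then show ?thesis using K' by (simp add: le_divide_eq)
    qed
    show "eventually (\<lambda>x. F x < a) at_top"
      using ev[OF e]
    proof eventually_elim
      case (elim x)
      have "F x \<le> ereal r"
        unfolding F_def
      proof (rule SUP_least)
        fix c assume "c \<in> L.Cset"
        then have "\<bar>L.Num c x / L.Den c x - 1\<bar> \<le> r" using elim er by force
        then show "ereal \<bar>L.Num c x / L.Den c x - 1\<bar> \<le> ereal r" by simp
      qed
      then show ?case using r(2) by simp
    qed
  qed
  then show ?thesis unfolding F_def L.Cset_def L.Num_def L.Den_def .
qed

end
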